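(* Let $0<p<1$ and $1<\alpha<2$, and let $\mu,\nu$ be real numbers with $\alpha-2<\mu,\nu<0$ satisfying $$\mu+\nu=\alpha-2,\qquad p\sin(\pi\mu)=(1-p)\sin(\pi\nu).$$ Then for every $n=0,1,2,\ldots$ and $t\in(0,1)$, $$\mathcal{I}_{p,0,1}^{\mu,\nu,2-\alpha}\big[\omega_{*}^{\mu,\nu}G_{n}(\mu,\nu,\cdot)\big](t)=\lambda_{n}G_{n}(\nu,\mu,t),\qquad \lambda_{n}=\frac{\Gamma(n+\alpha-1)}{\Gamma(n+1)}.$$
   Context: $P_n^{a,b}$ denotes the classical Jacobi polynomial of degree $n$ with parameters $a,b>-1$. For $t\in(0,1)$, $G_n(a,b,t):=P_n^{a,b}(2t-1)$ and $\omega_*^{\mu,\nu}(t):=t^{\nu}(1-t)^{\mu}$. For $\sigma>0$ and an interval $(a,b)$, ${}_{a}I_x^{\sigma}v(x)=\frac{1}{\Gamma(\sigma)}\int_a^x (x-y)^{\sigma-1}v(y)\,dy$ and ${}_{x}I_b^{\sigma}v(x)=\frac{1}{\Gamma(\sigma)}\int_x^b (y-x)^{\sigma-1}v(y)\,dy$. With $C_{\alpha,p}:=(\sin\pi\mu+\sin\pi\nu)/\sin\pi\alpha$, the two-sided fractional integral is $\mathcal{I}_{p,a,b}^{\mu,\nu,\varrho}v:=C_{\alpha,p}\big(p\,{}_{a}I_x^{\varrho}v+(1-p)\,{}_{x}I_b^{\varrho}v\big)$. *)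

theory Defs
  imports "HOL-Analysis.Analysis"
begin

definition jacobiP :: "nat \<Rightarrow> real \<Rightarrow> real \<Rightarrow> real \<Rightarrow> real" where
  "jacobiP n a b x =
     (\<Sum>k\<le>n. ((real n + a) gchoose (n - k)) * ((real n + b) gchoose k)
              * ((x - 1) / 2) ^ k * ((x + 1) / 2) ^ (n - k))"

definition G :: "nat \<Rightarrow> real \<Rightarrow> real \<Rightarrow> real \<Rightarrow> real" where
  "G n a b t = jacobiP n a b (2 * t - 1)"

definition omega_star :: "real \<Rightarrow> real \<Rightarrow> real \<Rightarrow> real" where
  "omega_star mu nu t = t powr nu * (1 - t) powr mu"

definition left_frac_int :: "real \<Rightarrow> real \<Rightarrow> (real \<Rightarrow> real) \<Rightarrow> real \<Rightarrow> real" where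
  "left_frac_int sg a v x = (1 / Gamma sg) * (LBINT y=a..x. (x - y) powr (sg - 1) * v y)"

definition right_frac_int :: "real \<Rightarrow> real \<Rightarrow> (real \<Rightarrow> real) \<Rightarrow> real \<Rightarrow> real" where
  "right_frac_int sg b v x = (1 / Gamma sg) * (LBINT y=x..b. (y - x) powr (sg - 1) * v y)"

definition C_const :: "real \<Rightarrow> real \<Rightarrow> real \<Rightarrow> real" where
  "C_const alpha mu nu = (sin (pi * mu) + sin (pi * nu)) / sin (pi * alpha)"

definition two_sided_int ::
  "real \<Rightarrow> real \<Rightarrow> real \<Rightarrow> real \<Rightarrow> real \<Rightarrow> real \<Rightarrow> real \<Rightarrow> (real \<Rightarrow> real) \<Rightarrow> real \<Rightarrow> real" where
  "two_sided_int alpha p a b mu nu rho v x =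
     C_const alpha mu nu * (p * left_frac_int rho a v x + (1 - p) * right_frac_int rho b v x)"

end

theory Submission
  imports Defs "HOL-Real_Asymp.Real_Asymp" "HOL-Computational_Algebra.Formal_Power_Series"
begin

lemma Gamma_reflection_real:
  fixes x :: real
  assumes "x \<notin> \<int>"
  shows "Gamma x * Gamma (1 - x) = pi / sin (pi * x)"
proof -
  have "Gamma (complex_of_real x) * Gamma (1 - complex_of_real x) =
        complex_of_real pi / sin (complex_of_real pi * complex_of_real x)"
    by (rule Gamma_reflection_complex)
  also have "Gamma (complex_of_real x) * Gamma (1 - complex_of_real x) = complex_of_real (Gamma x * Gamma (1 - x))"
    by (simp flip: Gamma_complex_of_real)
  also have "complex_of_real pi / sin (complex_of_real pi * complex_of_real x) = complex_of_real (pi / sin (pi * x))"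
    by (simp flip: sin_of_real)
  finally show ?thesis by (simp only: of_real_eq_iff)
qed

lemma sin_pi_neg:
  fixes b :: real assumes "-1 < b" "b < 0" shows "sin (pi * b) < 0"
proof -
  have "pi * (-b) < pi * 1" using assms by (intro mult_strict_left_mono) auto
  hence "sin (pi * (-b)) > 0" using assms by (intro sin_gt_zero) (auto simp: mult_less_0_iff)
  thus ?thesis by simp
qed

lemma not_Int_frac: fixes b :: real assumes "-1 < b" "b < 0" shows "b \<notin> \<int>"
proof
  assume "b \<in> \<int>" then obtain n where "b = of_int n" by (auto elim: Ints_cases)
  with assms show False by auto
qed

lemma Beta_LBINT:
  fixes a b :: real assumes "0 < a" "0 < b"
  shows "(LBINT y=0..1. y powr (a - 1) * (1 - y) powr (b - 1)) = Beta a b"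
    and "set_integrable lborel (einterval 0 1) (\<lambda>y. y powr (a - 1) * (1 - y) powr (b - 1))"
proof -
  have I: "set_integrable lborel {0..1} (\<lambda>y. y powr (a - 1) * (1 - y) powr (b - 1))"
    by (rule integrable_Beta[OF assms])
  have "(LBINT y=0..1. y powr (a - 1) * (1 - y) powr (b - 1)) = integral {0..1} (\<lambda>y. y powr (a - 1) * (1 - y) powr (b - 1))"
    using interval_integral_eq_integral[of 0 1 "\<lambda>y. y powr (a - 1) * (1 - y) powr (b - 1)"] I
    by (simp add: zero_ereal_def one_ereal_def)
  also have "\<dots> = Beta a b" using has_integral_Beta_real[OF assms] by (rule integral_unique)
  finally show "(LBINT y=0..1. y powr (a - 1) * (1 - y) powr (b - 1)) = Beta a b" .
  show "set_integrable lborel (einterval 0 1) (\<lambda>y. y powr (a - 1) * (1 - y) powr (b - 1))"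
    by (rule set_integrable_subset[OF I]) (auto simp: einterval_def zero_ereal_def)
qed

lemma aux_frac: fixes z P s A :: real
  shows "0 < z \<Longrightarrow> 0 < s \<Longrightarrow> 0 < P \<Longrightarrow> (A / P) / (s / z) * (s / z^2) = A / (P * z)"
  by (simp add: field_simps power2_eq_square)

lemma stieltjes_K:
  fixes b s :: real assumes b: "-1 < b" "b < 0" and s: "0 < s"
  shows "set_integrable lborel (einterval 0 \<infinity>) (\<lambda>u. u powr b / (u + s))"
    and "(LBINT u=0..\<infinity>. u powr b / (u + s)) = - pi * s powr b / sin (pi * b)"
proof -
  define g where "g = (\<lambda>y::real. s * y / (1 - y))"
  define g' where "g' = (\<lambda>y::real. s / (1 - y)^2)"
  define f where "f = (\<lambda>u::real. u powr b / (u + s))"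
  have eq: "f (g y) * g' y = s powr b * (y powr ((b + 1) - 1) * (1 - y) powr ((-b) - 1))"
    if "0 < y" "y < 1" for y
  proof -
    have y1: "0 < 1 - y" using that by simp
    have pb: "0 < (1 - y) powr b" using y1 by simp
    have gs: "g y + s = s / (1 - y)" using y1 by (simp add: g_def field_simps)
    have gb: "g y powr b = s powr b * y powr b / (1 - y) powr b"
      unfolding g_def using that s y1 by (simp add: powr_divide powr_mult)
    have r1: "(1 - y) powr ((-b) - 1) = 1 / ((1 - y) powr b * (1 - y))"
      using y1 by (simp add: powr_diff powr_minus_divide)
    have "f (g y) * g' y = (s powr b * y powr b / (1 - y) powr b) / (s / (1 - y)) * (s / (1 - y)^2)"
      by (simp add: f_def g'_def gs gb)
    also have "\<dots> = s powr b * y powr b / ((1 - y) powr b * (1 - y))"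
      using y1 s pb by (rule aux_frac)
    also have "\<dots> = s powr b * (y powr ((b + 1) - 1) * (1 - y) powr ((-b) - 1))"
      by (simp only: r1) simp
    finally show ?thesis .
  qed
  have deriv: "(g has_real_derivative g' x) (at x)" if "0 < x" "x < 1" for x
    using that unfolding g_def g'_def
    by (auto intro!: derivative_eq_intros simp: field_simps power2_eq_square)
  have lims1: "((ereal \<circ> g \<circ> real_of_ereal) \<longlongrightarrow> 0) (at_right 0)"
  proof -
    have "(g \<longlongrightarrow> 0) (at_right 0)" unfolding g_def by real_asymp
    thus ?thesis by (simp add: zero_ereal_def ereal_tendsto_simps)
  qed
  have lims2: "((ereal \<circ> g \<circ> real_of_ereal) \<longlongrightarrow> \<infinity>) (at_left 1)"
  proof -
    have "filterlim g at_top (at_left 1)" unfolding g_def using s by real_asymp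
    thus ?thesis by (simp add: one_ereal_def ereal_tendsto_simps)
  qed
  have intfg: "set_integrable lborel (einterval 0 1) (\<lambda>x. f (g x) * g' x)"
  proof -
    have "set_integrable lborel (einterval 0 1) (\<lambda>y. s powr b * (y powr ((b + 1) - 1) * (1 - y) powr ((-b) - 1)))"
      using Beta_LBINT(2)[of "b+1" "-b"] b by (intro set_integrable_mult_right) auto
    thus ?thesis
      by (rule set_integrable_cong[THEN iffD1, rotated -1]) (auto simp: eq einterval_def zero_ereal_def)
  qed
  have d: "\<And>x. 0 < ereal x \<Longrightarrow> ereal x < 1 \<Longrightarrow> DERIV g x :> g' x"
    using deriv by (simp add: zero_ereal_def one_ereal_def)
  have c1: "\<And>x. 0 < ereal x \<Longrightarrow> ereal x < 1 \<Longrightarrow> isCont f (g x)"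
  proof -
    fix x assume "0 < ereal x" "ereal x < 1"
    hence x: "0 < x" "x < 1" by (simp_all add: zero_ereal_def one_ereal_def)
    hence "0 < g x" using s by (simp add: g_def)
    thus "isCont f (g x)" unfolding f_def using s
      by (intro continuous_intros) auto
  qed
  have c2: "\<And>x. 0 < ereal x \<Longrightarrow> ereal x < 1 \<Longrightarrow> isCont g' x"
  proof -
    fix x assume "0 < ereal x" "ereal x < 1"
    hence x: "0 < x" "x < 1" by (simp_all add: zero_ereal_def one_ereal_def)
    thus "isCont g' x" unfolding g'_def by (intro continuous_intros) auto
  qed
  have nn: "\<And>x. 0 < ereal x \<Longrightarrow> ereal x < 1 \<Longrightarrow> 0 \<le> f (g x)"
  proof -
    fix x assume "0 < ereal x" "ereal x < 1"
    hence x: "0 < x" "x < 1" by (simp_all add: zero_ereal_def one_ereal_def)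
    hence "0 < g x" using s by (simp add: g_def)
    thus "0 \<le> f (g x)" unfolding f_def using s by simp
  qed
  have gnn: "\<And>x. 0 \<le> ereal x \<Longrightarrow> ereal x \<le> 1 \<Longrightarrow> 0 \<le> g' x"
    using s by (simp add: g'_def)
  have sub: "set_integrable lborel (einterval 0 \<infinity>) f"
     "(LBINT x=0..\<infinity>. f x) = (LBINT x=0..1. f (g x) * g' x)"
     apply (rule interval_integral_substitution_nonneg(1)[where a=0 and b=1 and g=g and g'=g'])
     apply simp apply (rule d c1 c2 nn gnn lims1 lims2 intfg; assumption)+
    apply (rule interval_integral_substitution_nonneg(2)[where a=0 and b=1 and g=g and g'=g'])
    apply simp apply (rule d c1 c2 nn gnn lims1 lims2 intfg; assumption)+
    done
  show "set_integrable lborel (einterval 0 \<infinity>) (\<lambda>u. u powr b / (u + s))"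
    using sub(1) by (simp add: f_def)
  have "(LBINT x=0..1. f (g x) * g' x) = (LBINT y=0..1. s powr b * (y powr ((b + 1) - 1) * (1 - y) powr ((-b) - 1)))"
    by (rule interval_integral_cong) (auto simp: eq einterval_def zero_ereal_def)
  also have "\<dots> = s powr b * Beta (b + 1) (-b)"
    using Beta_LBINT(1)[of "b+1" "-b"] b by simp
  also have "Beta (b + 1) (-b) = Gamma (b + 1) * Gamma (1 - (b + 1))"
    by (simp add: Beta_def)
  also have "\<dots> = pi / sin (pi * (b + 1))"
    by (rule Gamma_reflection_real) (use not_Int_frac[OF b] in \<open>metis Ints_1 Ints_diff add_diff_cancel_right'\<close>)
  also have "sin (pi * (b + 1)) = - sin (pi * b)" by (simp add: distrib_left)
  finally show "(LBINT u=0..\<infinity>. u powr b / (u + s)) = - pi * s powr b / sin (pi * b)"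
    using sub(2) by (simp add: f_def)
qed

lemma einterval_0_inf: "einterval 0 \<infinity> = {0::real<..}"
  by (auto simp: einterval_def zero_ereal_def)

lemma K_set:
  fixes b s :: real assumes b: "-1 < b" "b < 0" and s: "0 < s"
  shows "set_integrable lborel {0<..} (\<lambda>u. u powr b / (u + s))"
    and "(LINT u:{0<..}|lborel. u powr b / (u + s)) = - pi * s powr b / sin (pi * b)"
  using stieltjes_K[OF assms]
  by (simp_all add: einterval_0_inf interval_lebesgue_integral_def)

lemma meas_test: "set_borel_measurable lborel {0<..} (\<lambda>u::real. u powr a * (1+u) powr b / (u + k))"
  unfolding set_borel_measurable_def by measurable

lemma powr_collect3: fixes x a b :: real
  shows "0 < x \<Longrightarrow> x powr a * x powr b * x = x powr (a + b + 1)"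
  by (simp add: powr_add)

lemma B1:
  fixes a b t :: real
  assumes a: "-1 < a" "a < 0" and b: "-1 < b" "b < 0" and ab: "-1 < a + b"
    and t: "0 < t" "t < 1"
  defines "c \<equiv> -1 - a - b"
  shows "set_integrable lborel {0<..} (\<lambda>u. u powr a * (1 + u) powr b / (u + (1 - t)))"
    and "set_integrable lborel {0<..<t} (\<lambda>y. (t - y) powr c * y powr a * (1 - y) powr b)"
    and "(LINT y:{0<..<t}|lborel. (t - y) powr c * y powr a * (1 - y) powr b) =
          t powr (-b) * (1 - t) powr (-a) * (LINT u:{0<..}|lborel. u powr a * (1 + u) powr b / (u + (1 - t)))"
proof -
  define k where "k = 1 - t"
  have k: "0 < k" "t + k = 1" using t by (auto simp: k_def)
  show I: "set_integrable lborel {0<..} (\<lambda>u. u powr a * (1 + u) powr b / (u + (1 - t)))"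
  proof (rule set_integrable_bound[OF K_set(1)[OF a k(1)]])
    show "set_borel_measurable lborel {0<..} (\<lambda>u. u powr a * (1 + u) powr b / (u + (1 - t)))"
      unfolding set_borel_measurable_def by measurable
    show "AE x in lborel. x \<in> {0<..} \<longrightarrow> norm (x powr a * (1 + x) powr b / (x + (1 - t))) \<le> norm (x powr a / (x + k))"
    proof (rule AE_I2, intro impI)
      fix x :: real assume x: "x \<in> {0<..}"
      have "(1 + x) powr b \<le> (1 + x) powr 0" using x b by (intro powr_mono) auto
      hence "(1 + x) powr b \<le> 1" using x by simp
      thus "norm (x powr a * (1 + x) powr b / (x + (1 - t))) \<le> norm (x powr a / (x + k))"
        using x k by (auto simp: k_def abs_mult divide_simps intro!: mult_left_le)
    qed
  qed
  define g where "g = (\<lambda>u::real. t * u / (k + u))"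
  define g' where "g' = (\<lambda>u::real. t * k / (k + u)^2)"
  define f where "f = (\<lambda>y::real. (t - y) powr c * y powr a * (1 - y) powr b)"
  have eq: "f (g u) * g' u = t powr (-b) * k powr (-a) * (u powr a * (1 + u) powr b / (u + k))"
    if u: "0 < u" for u
  proof -
    define q where "q = k + u"
    have q: "0 < q" using u k by (simp add: q_def)
    have e1: "t - g u = t * k / q" using k q by (simp add: g_def q_def field_simps)
    have e2: "g u = t * u / q" by (simp add: g_def q_def)
    have e3: "1 - g u = k * (1 + u) / q" using k q by (simp add: g_def q_def field_simps) (simp add: k_def algebra_simps)
    have p1: "(t * k / q) powr c = t powr c * k powr c / q powr c"
      using t k q by (simp add: powr_divide powr_mult)
    have p2: "(t * u / q) powr a = t powr a * u powr a / q powr a"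
      using t u q by (simp add: powr_divide powr_mult)
    have p3: "(k * (1 + u) / q) powr b = k powr b * (1 + u) powr b / q powr b"
      using k u q by (simp add: powr_divide powr_mult)
    have "f (g u) * g' u = (t * k / q) powr c * (t * u / q) powr a * (k * (1 + u) / q) powr b * (t * k / q^2)"
      unfolding f_def unfolding e1 e3 unfolding e2 by (simp add: g'_def q_def)
    also have "\<dots> = (t powr c * k powr c / q powr c) * (t powr a * u powr a / q powr a) *
            (k powr b * (1 + u) powr b / q powr b) * (t * k / q^2)"
      unfolding p1 p2 p3 ..
    also have "\<dots> = (t powr c * t powr a * t) * (k powr c * k powr b * k) * (u powr a * (1 + u) powr b)
                     / ((q powr c * q powr a * q powr b) * q^2)"
      by (simp add: field_simps)
    also have "t powr c * t powr a * t = t powr (-b)" using t by (subst powr_collect3) (auto simp: c_def)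
    also have "k powr c * k powr b * k = k powr (-a)" using k by (subst powr_collect3) (auto simp: c_def)
    also have "q powr c * q powr a * q powr b = q powr (-1)" using q by (simp add: c_def flip: powr_add)
    also have "q powr (-1) * q^2 = q" using q by (simp add: powr_minus power2_eq_square field_simps)
    finally show ?thesis by (simp add: q_def add.commute)
  qed
  have I': "set_integrable lborel (einterval 0 \<infinity>) (\<lambda>u. f (g u) * g' u)"
  proof -
    have "set_integrable lborel {0<..} (\<lambda>u. t powr (-b) * k powr (-a) * (u powr a * (1 + u) powr b / (u + k)))"
      using I by (intro set_integrable_mult_right) (auto simp: k_def add.commute)
    thus ?thesis unfolding einterval_0_inf
      by (rule set_integrable_cong[THEN iffD1, rotated -1]) (auto simp: eq)
  qed
  have d: "\<And>x. 0 < ereal x \<Longrightarrow> ereal x < \<infinity> \<Longrightarrow> DERIV g x :> g' x"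
    using k unfolding g_def g'_def
    by (auto intro!: derivative_eq_intros simp: zero_ereal_def field_simps power2_eq_square)
  have c1: "\<And>x. 0 < ereal x \<Longrightarrow> ereal x < \<infinity> \<Longrightarrow> isCont f (g x)"
  proof -
    fix x assume "0 < ereal x" "ereal x < \<infinity>"
    hence x: "0 < x" by (simp_all add: zero_ereal_def)
    have kx: "0 < k + x" using x k by simp
    have g1: "g x < t" unfolding g_def using kx mult_pos_pos[OF t(1) k(1)]
      by (simp add: divide_less_eq algebra_simps)
    have g2: "g x < 1" using g1 t by linarith
    have g0: "0 < g x" using t x kx by (simp add: g_def)
    from g0 g1 g2 have "0 < g x" "g x < t" "g x < 1" by auto
    thus "isCont f (g x)" unfolding f_def
      by (intro continuous_intros) auto
  qed
  have c2: "\<And>x. 0 < ereal x \<Longrightarrow> ereal x < \<infinity> \<Longrightarrow> isCont g' x"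
  proof -
    fix x assume "0 < ereal x" "ereal x < \<infinity>"
    hence x: "0 < x" by (simp_all add: zero_ereal_def)
    thus "isCont g' x" unfolding g'_def using k by (intro continuous_intros) auto
  qed
  have nn: "\<And>x. 0 < ereal x \<Longrightarrow> ereal x < \<infinity> \<Longrightarrow> 0 \<le> f (g x)"
    unfolding f_def by auto
  have gnn: "\<And>x. 0 \<le> ereal x \<Longrightarrow> ereal x \<le> \<infinity> \<Longrightarrow> 0 \<le> g' x"
    using k t by (simp add: g'_def)
  have lims1: "((ereal \<circ> g \<circ> real_of_ereal) \<longlongrightarrow> 0) (at_right 0)"
  proof -
    have "(g \<longlongrightarrow> 0) (at_right 0)" unfolding g_def using k by real_asymp
    thus ?thesis by (simp add: zero_ereal_def ereal_tendsto_simps)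
  qed
  have lims2: "((ereal \<circ> g \<circ> real_of_ereal) \<longlongrightarrow> ereal t) (at_left \<infinity>)"
  proof -
    have "(g \<longlongrightarrow> t) at_top" unfolding g_def using k by real_asymp
    thus ?thesis by (simp add: ereal_tendsto_simps)
  qed
  have sub: "set_integrable lborel (einterval 0 (ereal t)) f"
     "(LBINT x=0..ereal t. f x) = (LBINT x=0..\<infinity>. f (g x) * g' x)"
     apply (rule interval_integral_substitution_nonneg(1)[where a=0 and b=\<infinity> and g=g and g'=g'])
     apply simp apply (rule d c1 c2 nn gnn lims1 lims2 I'; assumption)+
    apply (rule interval_integral_substitution_nonneg(2)[where a=0 and b=\<infinity> and g=g and g'=g'])
    apply simp apply (rule d c1 c2 nn gnn lims1 lims2 I'; assumption)+
    done
  have et: "einterval 0 (ereal t) = {0<..<t}" by (auto simp: einterval_def zero_ereal_def)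
  show "set_integrable lborel {0<..<t} (\<lambda>y. (t - y) powr c * y powr a * (1 - y) powr b)"
    using sub(1) by (simp add: et f_def)
  have "(LINT y:{0<..<t}|lborel. (t - y) powr c * y powr a * (1 - y) powr b) = (LBINT x=0..\<infinity>. f (g x) * g' x)"
    using sub(2) t by (simp add: interval_lebesgue_integral_def et f_def)
  also have "\<dots> = (LINT u:{0<..}|lborel. t powr (-b) * k powr (-a) * (u powr a * (1 + u) powr b / (u + k)))"
    unfolding interval_lebesgue_integral_def einterval_0_inf
    by (simp, rule set_lebesgue_integral_cong) (auto simp: eq)
  also have "\<dots> = t powr (-b) * k powr (-a) * (LINT u:{0<..}|lborel. u powr a * (1 + u) powr b / (u + k))"
    by (rule set_integral_mult_right)
  finally show "(LINT y:{0<..<t}|lborel. (t - y) powr c * y powr a * (1 - y) powr b) =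
          t powr (-b) * (1 - t) powr (-a) * (LINT u:{0<..}|lborel. u powr a * (1 + u) powr b / (u + (1 - t)))"
    by (simp only: k_def)
qed

lemma set_reflect01:
  fixes F :: "real \<Rightarrow> real" and l r :: real
  shows "(LINT y:{l<..<r}|lborel. F y) = (LINT z:{1-r<..<1-l}|lborel. F (1 - z))"
    and "set_integrable lborel {l<..<r} F \<longleftrightarrow> set_integrable lborel {1-r<..<1-l} (\<lambda>z. F (1 - z))"
proof -
  have ind: "indicator {l<..<r} (1 - z) = (indicator {1-r<..<1-l} z :: real)" for z
    by (auto simp: indicator_def)
  show "(LINT y:{l<..<r}|lborel. F y) = (LINT z:{1-r<..<1-l}|lborel. F (1 - z))"
    unfolding set_lebesgue_integral_def
    by (subst lborel_integral_real_affine[where c="-1" and t=1]) (simp_all add: ind)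
  show "set_integrable lborel {l<..<r} F \<longleftrightarrow> set_integrable lborel {1-r<..<1-l} (\<lambda>z. F (1 - z))"
    unfolding set_integrable_def
    using lborel_integrable_real_affine_iff[where c="-1" and t=1 and f="\<lambda>y. indicator {l<..<r} y *\<^sub>R F y"]
    by (simp add: ind)
qed

lemma B2:
  fixes a b t :: real
  assumes a: "-1 < a" "a < 0" and b: "-1 < b" "b < 0" and ab: "-1 < a + b"
    and t: "0 < t" "t < 1"
  defines "c \<equiv> -1 - a - b"
  shows "set_integrable lborel {0<..} (\<lambda>u. u powr b * (1 + u) powr a / (u + t))"
    and "set_integrable lborel {t<..<1} (\<lambda>y. (y - t) powr c * y powr a * (1 - y) powr b)"
    and "(LINT y:{t<..<1}|lborel. (y - t) powr c * y powr a * (1 - y) powr b) =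
          t powr (-b) * (1 - t) powr (-a) * (LINT u:{0<..}|lborel. u powr b * (1 + u) powr a / (u + t))"
proof -
  have t': "0 < 1 - t" "1 - t < 1" using t by auto
  have ba: "-1 < b + a" using ab by simp
  have cc: "c = -1 - b - a" by (simp add: c_def)
  note B = B1[OF b a ba t', folded cc]
  show "set_integrable lborel {0<..} (\<lambda>u. u powr b * (1 + u) powr a / (u + t))"
    using B(1) by simp
  have "set_integrable lborel {1-1<..<1-t} (\<lambda>z. (1 - z - t) powr c * (1 - z) powr a * (1 - (1 - z)) powr b)"
    using B(2) by (rule set_integrable_cong[THEN iffD1, rotated -1]) (auto simp: algebra_simps)
  thus "set_integrable lborel {t<..<1} (\<lambda>y. (y - t) powr c * y powr a * (1 - y) powr b)"
    by (rule set_reflect01(2)[THEN iffD2])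
  have "(LINT y:{t<..<1}|lborel. (y - t) powr c * y powr a * (1 - y) powr b) =
        (LINT z:{1-1<..<1-t}|lborel. (1 - z - t) powr c * (1 - z) powr a * (1 - (1 - z)) powr b)"
    by (rule set_reflect01(1))
  also have "\<dots> = (LINT z:{0<..<1-t}|lborel. (1 - t - z) powr c * z powr b * (1 - z) powr a)"
    by (subst diff_self, rule set_lebesgue_integral_cong) (auto simp: algebra_simps)
  finally show "(LINT y:{t<..<1}|lborel. (y - t) powr c * y powr a * (1 - y) powr b) =
          t powr (-b) * (1 - t) powr (-a) * (LINT u:{0<..}|lborel. u powr b * (1 + u) powr a / (u + t))"
    using B(3) by (simp add: mult_ac)
qed

lemma nn_of_set:
  fixes f :: "real \<Rightarrow> real"
  assumes "set_integrable lborel S f" "\<And>x. x \<in> S \<Longrightarrow> 0 \<le> f x"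
  shows "(\<integral>\<^sup>+x. ennreal (indicator S x * f x) \<partial>lborel) = ennreal (LINT x:S|lborel. f x)"
proof -
  have "(\<integral>\<^sup>+x. ennreal (indicator S x * f x) \<partial>lborel) = ennreal (integral\<^sup>L lborel (\<lambda>x. indicator S x * f x))"
    using assms unfolding set_integrable_def
    by (intro nn_integral_eq_integral) (auto simp: indicator_def)
  thus ?thesis by (simp add: set_lebesgue_integral_def)
qed

lemma set_of_nn:
  fixes f :: "real \<Rightarrow> real"
  assumes "set_borel_measurable lborel S f" "\<And>x. x \<in> S \<Longrightarrow> 0 \<le> f x"
    and "(\<integral>\<^sup>+x. ennreal (indicator S x * f x) \<partial>lborel) = ennreal r" "0 \<le> r"
  shows "set_integrable lborel S f" "(LINT x:S|lborel. f x) = r"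
proof -
  have m: "(\<lambda>x. indicator S x * f x) \<in> borel_measurable lborel"
    using assms(1) by (simp add: set_borel_measurable_def)
  have "integrable lborel (\<lambda>x. indicator S x * f x) \<and> integral\<^sup>L lborel (\<lambda>x. indicator S x * f x) = r"
    using nn_integral_eq_integrable[OF m _ assms(4)] assms(2,3) by (auto simp: indicator_def)
  thus "set_integrable lborel S f" "(LINT x:S|lborel. f x) = r"
    by (simp_all add: set_integrable_def set_lebesgue_integral_def)
qed

lemma A_integrable:
  fixes a b s :: real assumes a: "-1 < a" "a < 0" and b: "b \<le> 0" and s: "0 < s"
  shows "set_integrable lborel {0<..} (\<lambda>u. u powr a * (1 + u) powr b / (u + s))"
proof (rule set_integrable_bound[OF K_set(1)[OF a s]])
  show "set_borel_measurable lborel {0<..} (\<lambda>u. u powr a * (1 + u) powr b / (u + s))"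
    unfolding set_borel_measurable_def by measurable
  show "AE x in lborel. x \<in> {0<..} \<longrightarrow> norm (x powr a * (1 + x) powr b / (x + s)) \<le> norm (x powr a / (x + s))"
  proof (rule AE_I2, intro impI)
    fix x :: real assume x: "x \<in> {0<..}"
    have "(1 + x) powr b \<le> (1 + x) powr 0" using x b by (intro powr_mono) auto
    hence "(1 + x) powr b \<le> 1" using x by simp
    thus "norm (x powr a * (1 + x) powr b / (x + s)) \<le> norm (x powr a / (x + s))"
      using x s by (auto simp: abs_mult divide_simps intro!: mult_left_le)
  qed
qed

lemma S2:
  fixes nu s X :: real assumes nu: "-1 < nu" "nu < 0" and s: "0 < s" and X: "s < X"
  shows "set_integrable lborel {0<..} (\<lambda>u. u powr nu / ((u + X) * (u + s)))"
    and "(LINT u:{0<..}|lborel. u powr nu / ((u + X) * (u + s))) = pi / (- sin (pi * nu)) * (s powr nu - X powr nu) / (X - s)"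
proof -
  have X0: "0 < X" using s X by simp
  note I1 = K_set[OF nu s] and I2 = K_set[OF nu X0]
  have eq: "u powr nu / ((u + X) * (u + s)) = (u powr nu / (u + s) - u powr nu / (u + X)) / (X - s)"
    if "u \<in> {0<..}" for u
  proof -
    have h: "u + s \<noteq> 0" "u + X \<noteq> 0" "X - s \<noteq> 0" using that s X by auto
    have e: "u powr nu / (u + s) - u powr nu / (u + X) = u powr nu * (X - s) / ((u + X) * (u + s))"
      using h by (simp add: diff_frac_eq algebra_simps)
    show ?thesis unfolding e using h(3) by simp
  qed
  have D: "set_integrable lborel {0<..} (\<lambda>u. (u powr nu / (u + s) - u powr nu / (u + X)) / (X - s))"
    using set_integral_diff(1)[OF I1(1) I2(1)] by (rule set_integrable_divide)
  show "set_integrable lborel {0<..} (\<lambda>u. u powr nu / ((u + X) * (u + s)))"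
    using D by (rule set_integrable_cong[THEN iffD1, rotated -1]) (auto simp: eq)
  have "(LINT u:{0<..}|lborel. u powr nu / ((u + X) * (u + s))) =
        (LINT u:{0<..}|lborel. (u powr nu / (u + s) - u powr nu / (u + X)) / (X - s))"
    by (rule set_lebesgue_integral_cong) (auto simp: eq)
  also have "\<dots> = ((- pi * s powr nu / sin (pi * nu)) - (- pi * X powr nu / sin (pi * nu))) / (X - s)"
    using set_integral_diff(2)[OF I1(1) I2(1)] I1(2) I2(2) by simp
  also have "\<dots> = pi / (- sin (pi * nu)) * (s powr nu - X powr nu) / (X - s)"
    using sin_pi_neg[OF nu] X by (simp add: field_simps)
  finally show "(LINT u:{0<..}|lborel. u powr nu / ((u + X) * (u + s))) = pi / (- sin (pi * nu)) * (s powr nu - X powr nu) / (X - s)" .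
qed

lemma set_integral_nonneg':
  fixes f :: "real \<Rightarrow> real"
  shows "(\<And>x. x \<in> S \<Longrightarrow> 0 \<le> f x) \<Longrightarrow> 0 \<le> (LINT x:S|M. f x)"
  unfolding set_lebesgue_integral_def
  by (rule Bochner_Integration.integral_nonneg) (auto simp: indicator_def)

lemma S3:
  fixes mu nu s :: real
  assumes mu: "-1 < mu" "mu < 0" and nu: "-1 < nu" "nu < 0" and s: "0 < s" "s < 1"
  shows "set_integrable lborel {0<..} (\<lambda>x. x powr mu * (s powr nu - (1 + x) powr nu) / (x + 1 - s))"
    and "pi / (- sin (pi * nu)) * (LINT x:{0<..}|lborel. x powr mu * (s powr nu - (1 + x) powr nu) / (x + 1 - s))
         = pi / (- sin (pi * mu)) * (LINT u:{0<..}|lborel. u powr nu * (1 + u) powr mu / (u + s))"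
proof -
  define C1 where "C1 = pi / (- sin (pi * mu))"
  define C2 where "C2 = pi / (- sin (pi * nu))"
  have C1: "0 < C1" using sin_pi_neg[OF mu] pi_gt_zero by (simp add: C1_def divide_pos_neg)
  have C2: "0 < C2" using sin_pi_neg[OF nu] pi_gt_zero by (simp add: C2_def divide_pos_neg)
  define D where "D = (\<lambda>x::real. x powr mu * (s powr nu - (1 + x) powr nu) / (x + 1 - s))"
  define Af where "Af = (\<lambda>u::real. u powr nu * (1 + u) powr mu / (u + s))"
  define F where "F = (\<lambda>u x::real. ennreal (indicator {0<..} u * indicator {0<..} x *
                        (u powr nu * x powr mu / ((u + (x + 1)) * (u + s)))))"
  have Fub: "(\<integral>\<^sup>+u. (\<integral>\<^sup>+x. F u x \<partial>lborel) \<partial>lborel) = (\<integral>\<^sup>+x. (\<integral>\<^sup>+u. F u x \<partial>lborel) \<partial>lborel)"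
    by (rule lborel_pair.Fubini'[symmetric]) (unfold F_def case_prod_unfold, measurable)
  have Dnn: "0 \<le> D x" if "x \<in> {0<..}" for x
  proof -
    have "(1 + x) powr nu < s powr nu" using that s nu by (intro powr_less_mono2_neg) auto
    thus ?thesis using that s by (auto simp: D_def)
  qed
  have inL: "(\<integral>\<^sup>+x. F u x \<partial>lborel) = ennreal (indicator {0<..} u * (C1 * Af u))" for u
  proof (cases "0 < u")
    case False thus ?thesis by (simp add: F_def indicator_def)
  next
    case True
    have "(\<integral>\<^sup>+x. F u x \<partial>lborel) = (\<integral>\<^sup>+x. ennreal (u powr nu / (u + s)) *
            ennreal (indicator {0<..} x * (x powr mu / (x + (1 + u)))) \<partial>lborel)"
      using True s by (intro nn_integral_cong) (auto simp: F_def indicator_def ennreal_mult'[symmetric] algebra_simps)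
    also have "\<dots> = ennreal (u powr nu / (u + s)) * (\<integral>\<^sup>+x. ennreal (indicator {0<..} x * (x powr mu / (x + (1 + u)))) \<partial>lborel)"
      by (rule nn_integral_cmult) measurable
    also have "(\<integral>\<^sup>+x. ennreal (indicator {0<..} x * (x powr mu / (x + (1 + u)))) \<partial>lborel) =
               ennreal (- pi * (1 + u) powr mu / sin (pi * mu))"
      using nn_of_set[OF K_set(1)[OF mu, of "1 + u"]] K_set(2)[OF mu, of "1 + u"] True by simp
    also have "ennreal (u powr nu / (u + s)) * ennreal (- pi * (1 + u) powr mu / sin (pi * mu)) =
               ennreal (u powr nu / (u + s) * (- pi * (1 + u) powr mu / sin (pi * mu)))"
      using True s by (intro ennreal_mult'[symmetric]) auto
    also have "u powr nu / (u + s) * (- pi * (1 + u) powr mu / sin (pi * mu)) = indicator {0<..} u * (C1 * Af u)"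
      using True by (simp add: C1_def Af_def field_simps)
    finally show ?thesis .
  qed
  have inR: "(\<integral>\<^sup>+u. F u x \<partial>lborel) = ennreal (indicator {0<..} x * (C2 * D x))" for x
  proof (cases "0 < x")
    case False thus ?thesis by (simp add: F_def indicator_def)
  next
    case True
    have X: "s < x + 1" using True s by simp
    have "(\<integral>\<^sup>+u. F u x \<partial>lborel) = (\<integral>\<^sup>+u. ennreal (x powr mu) *
            ennreal (indicator {0<..} u * (u powr nu / ((u + (x + 1)) * (u + s)))) \<partial>lborel)"
      using True s by (intro nn_integral_cong) (auto simp: F_def indicator_def ennreal_mult'[symmetric] algebra_simps)
    also have "\<dots> = ennreal (x powr mu) * (\<integral>\<^sup>+u. ennreal (indicator {0<..} u * (u powr nu / ((u + (x + 1)) * (u + s)))) \<partial>lborel)"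
      by (rule nn_integral_cmult) measurable
    also have "(\<integral>\<^sup>+u. ennreal (indicator {0<..} u * (u powr nu / ((u + (x + 1)) * (u + s)))) \<partial>lborel) =
               ennreal (pi / (- sin (pi * nu)) * (s powr nu - (x + 1) powr nu) / ((x + 1) - s))"
    proof -
      have pos: "\<And>u. u \<in> {0<..} \<Longrightarrow> 0 \<le> u powr nu / ((u + (x + 1)) * (u + s))"
        using True s by (auto intro!: divide_nonneg_pos mult_pos_pos)
      show ?thesis using nn_of_set[OF S2(1)[OF nu s(1) X] pos] S2(2)[OF nu s(1) X] by simp
    qed
    also have "ennreal (x powr mu) * ennreal (pi / (- sin (pi * nu)) * (s powr nu - (x + 1) powr nu) / ((x + 1) - s)) =
               ennreal (x powr mu * (pi / (- sin (pi * nu)) * (s powr nu - (x + 1) powr nu) / ((x + 1) - s)))"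
      using True by (intro ennreal_mult'[symmetric]) auto
    also have "x powr mu * (pi / (- sin (pi * nu)) * (s powr nu - (x + 1) powr nu) / ((x + 1) - s)) = indicator {0<..} x * (C2 * D x)"
      using True by (simp add: C2_def D_def field_simps add.commute)
    finally show ?thesis .
  qed
  have IA: "set_integrable lborel {0<..} (\<lambda>u. C1 * Af u)"
    unfolding Af_def using A_integrable[OF nu _ s(1), of mu] mu by (intro set_integrable_mult_right) auto
  have "(\<integral>\<^sup>+u. (\<integral>\<^sup>+x. F u x \<partial>lborel) \<partial>lborel) = ennreal (LINT u:{0<..}|lborel. C1 * Af u)"
    unfolding inL
    by (rule nn_of_set[OF IA]) (use C1 s in \<open>auto simp: Af_def\<close>)
  hence eq: "(\<integral>\<^sup>+x. ennreal (indicator {0<..} x * (C2 * D x)) \<partial>lborel) = ennreal (C1 * (LINT u:{0<..}|lborel. Af u))"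
    unfolding Fub inR by simp
  have nnv: "0 \<le> C1 * (LINT u:{0<..}|lborel. Af u)"
    using C1 s by (intro mult_nonneg_nonneg set_integral_nonneg') (auto simp: Af_def)
  have meas: "set_borel_measurable lborel {0<..} (\<lambda>x. C2 * D x)"
    unfolding set_borel_measurable_def D_def by measurable
  note R = set_of_nn[OF meas _ eq nnv]
  have R1: "set_integrable lborel {0<..} (\<lambda>x. C2 * D x)" by (rule R(1)) (use C2 Dnn in auto)
  have R2: "(LINT x:{0<..}|lborel. C2 * D x) = C1 * (LINT u:{0<..}|lborel. Af u)" by (rule R(2)) (use C2 Dnn in auto)
  have "set_integrable lborel {0<..} D"
    using R1 C2 set_integrable_mult_right_iff[of C2 lborel "{0<..}" D] by simp
  thus "set_integrable lborel {0<..} (\<lambda>x. x powr mu * (s powr nu - (1 + x) powr nu) / (x + 1 - s))"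
    unfolding D_def .
  show "pi / (- sin (pi * nu)) * (LINT x:{0<..}|lborel. x powr mu * (s powr nu - (1 + x) powr nu) / (x + 1 - s))
         = pi / (- sin (pi * mu)) * (LINT u:{0<..}|lborel. u powr nu * (1 + u) powr mu / (u + s))"
  proof -
    have "C2 * (LINT x:{0<..}|lborel. D x) = C1 * (LINT u:{0<..}|lborel. Af u)"
      using R2 by (simp only: set_integral_mult_right)
    thus ?thesis unfolding C1_def C2_def D_def Af_def .
  qed
qed

lemma B3:
  fixes mu nu s :: real
  assumes mu: "-1 < mu" "mu < 0" and nu: "-1 < nu" "nu < 0" and s: "0 < s" "s < 1"
  shows "sin (pi * nu) * (LINT u:{0<..}|lborel. u powr nu * (1 + u) powr mu / (u + s))
       + sin (pi * mu) * (LINT u:{0<..}|lborel. u powr mu * (1 + u) powr nu / (u + (1 - s)))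
       = - pi * s powr nu * (1 - s) powr mu"
proof -
  define Dint where "Dint = (LINT x:{0<..}|lborel. x powr mu * (s powr nu - (1 + x) powr nu) / (x + 1 - s))"
  define A1 where "A1 = (LINT u:{0<..}|lborel. u powr nu * (1 + u) powr mu / (u + s))"
  define A2 where "A2 = (LINT u:{0<..}|lborel. u powr mu * (1 + u) powr nu / (u + (1 - s)))"
  have sm: "sin (pi * mu) < 0" and sn: "sin (pi * nu) < 0" using sin_pi_neg mu nu by auto
  have "pi / (- sin (pi * nu)) * Dint = pi / (- sin (pi * mu)) * A1"
    using S3(2)[OF mu nu s] by (simp add: Dint_def A1_def)
  hence e1: "sin (pi * nu) * A1 = sin (pi * mu) * Dint"
    using sm sn pi_gt_zero by (simp add: field_simps)
  have s1: "0 < 1 - s" using s by simp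
  have ID: "set_integrable lborel {0<..} (\<lambda>x. x powr mu * (s powr nu - (1 + x) powr nu) / (x + 1 - s))"
    by (rule S3(1)[OF mu nu s])
  have IA2: "set_integrable lborel {0<..} (\<lambda>u. u powr mu * (1 + u) powr nu / (u + (1 - s)))"
    using A_integrable[OF mu _ s1, of nu] nu by simp
  have "Dint + A2 = (LINT x:{0<..}|lborel. x powr mu * (s powr nu - (1 + x) powr nu) / (x + 1 - s)
                      + x powr mu * (1 + x) powr nu / (x + (1 - s)))"
    unfolding Dint_def A2_def by (rule set_integral_add(2)[OF ID IA2, symmetric])
  also have "\<dots> = (LINT x:{0<..}|lborel. s powr nu * (x powr mu / (x + (1 - s))))"
  proof (rule set_lebesgue_integral_cong, simp, intro allI impI, goal_cases)
    case (1 x)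
    have e: "x + 1 - s = x + (1 - s)" by simp
    have "x powr mu * (s powr nu - (1 + x) powr nu) / (x + 1 - s) + x powr mu * (1 + x) powr nu / (x + (1 - s))
          = (x powr mu * (s powr nu - (1 + x) powr nu) + x powr mu * (1 + x) powr nu) / (x + (1 - s))"
      unfolding e by (rule add_divide_distrib[symmetric])
    also have "\<dots> = s powr nu * (x powr mu / (x + (1 - s)))" by (simp add: algebra_simps)
    finally show ?case .
  qed
  also have "\<dots> = s powr nu * (- pi * (1 - s) powr mu / sin (pi * mu))"
    by (subst set_integral_mult_right) (use K_set(2)[OF mu s1] in simp)
  finally have e2: "Dint + A2 = s powr nu * (- pi * (1 - s) powr mu / sin (pi * mu))" .
  have "sin (pi * nu) * A1 + sin (pi * mu) * A2 = sin (pi * mu) * (Dint + A2)"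
    using e1 by (simp add: algebra_simps)
  also have "\<dots> = - pi * s powr nu * (1 - s) powr mu"
    unfolding e2 using sm by (simp add: field_simps)
  finally show ?thesis by (simp add: A1_def A2_def)
qed

lemma base_identity:
  fixes mu nu t :: real
  assumes mu: "-1 < mu" "mu < 0" and nu: "-1 < nu" "nu < 0" and mn: "-1 < mu + nu"
    and t: "0 < t" "t < 1"
  defines "c \<equiv> -1 - mu - nu"
  shows "set_integrable lborel {0<..<t} (\<lambda>y. (t - y) powr c * y powr nu * (1 - y) powr mu)"
    and "set_integrable lborel {t<..<1} (\<lambda>y. (y - t) powr c * y powr nu * (1 - y) powr mu)"
    and "sin (pi * nu) * (LINT y:{0<..<t}|lborel. (t - y) powr c * y powr nu * (1 - y) powr mu)
       + sin (pi * mu) * (LINT y:{t<..<1}|lborel. (y - t) powr c * y powr nu * (1 - y) powr mu) = - pi"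
proof -
  have nm: "-1 < nu + mu" using mn by simp
  have cc: "c = -1 - nu - mu" by (simp add: c_def)
  note L = B1[OF nu mu nm t, folded cc]
  note R = B2[OF nu mu nm t, folded cc]
  show "set_integrable lborel {0<..<t} (\<lambda>y. (t - y) powr c * y powr nu * (1 - y) powr mu)" by (rule L(2))
  show "set_integrable lborel {t<..<1} (\<lambda>y. (y - t) powr c * y powr nu * (1 - y) powr mu)" by (rule R(2))
  have t1: "0 < 1 - t" "1 - t < 1" using t by auto
  have b3: "sin (pi * nu) * (LINT u:{0<..}|lborel. u powr nu * (1 + u) powr mu / (u + (1 - t)))
       + sin (pi * mu) * (LINT u:{0<..}|lborel. u powr mu * (1 + u) powr nu / (u + t))
       = - pi * (1 - t) powr nu * t powr mu"
    using B3[OF mu nu t1] by simp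
  have "sin (pi * nu) * (LINT y:{0<..<t}|lborel. (t - y) powr c * y powr nu * (1 - y) powr mu)
       + sin (pi * mu) * (LINT y:{t<..<1}|lborel. (y - t) powr c * y powr nu * (1 - y) powr mu)
       = t powr (-mu) * (1 - t) powr (-nu) * (- pi * (1 - t) powr nu * t powr mu)"
    unfolding L(3) R(3) b3[symmetric] by (simp add: algebra_simps)
  also have "\<dots> = - pi" using t t1 by (simp add: powr_minus field_simps)
  finally show "sin (pi * nu) * (LINT y:{0<..<t}|lborel. (t - y) powr c * y powr nu * (1 - y) powr mu)
       + sin (pi * mu) * (LINT y:{t<..<1}|lborel. (y - t) powr c * y powr nu * (1 - y) powr mu) = - pi" .
qed

lemma ftc_left:
  fixes c y a b :: real assumes c: "-1 < c" and ya: "y \<le> a" and ab: "a \<le> b"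
  shows "((\<lambda>\<tau>. (\<tau> - y) powr c) has_integral ((b - y) powr (c + 1) - (a - y) powr (c + 1)) / (c + 1)) {a<..<b}"
proof -
  have "((\<lambda>\<tau>. (\<tau> - y) powr c) has_integral ((\<lambda>\<tau>. (\<tau> - y) powr (c + 1) / (c + 1)) b - (\<lambda>\<tau>. (\<tau> - y) powr (c + 1) / (c + 1)) a)) {a..b}"
  proof (rule fundamental_theorem_of_calculus_interior[OF ab])
    show "continuous_on {a..b} (\<lambda>\<tau>. (\<tau> - y) powr (c + 1) / (c + 1))"
      using c ya by (intro continuous_intros continuous_on_powr') auto
    fix x assume x: "x \<in> {a<..<b}"
    hence "0 < x - y" using ya by auto
    thus "((\<lambda>\<tau>. (\<tau> - y) powr (c + 1) / (c + 1)) has_vector_derivative (x - y) powr c) (at x)"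
      using c unfolding has_real_derivative_iff_has_vector_derivative[symmetric]
      by (auto intro!: derivative_eq_intros simp: powr_diff)
  qed
  thus ?thesis by (simp add: has_integral_Icc_iff_Ioo diff_divide_distrib)
qed

lemma ftc_right:
  fixes c y a b :: real assumes c: "-1 < c" and hb: "b \<le> y" and ab: "a \<le> b"
  shows "((\<lambda>\<tau>. (y - \<tau>) powr c) has_integral ((y - a) powr (c + 1) - (y - b) powr (c + 1)) / (c + 1)) {a<..<b}"
proof -
  have "((\<lambda>\<tau>. (y - \<tau>) powr c) has_integral ((\<lambda>\<tau>. - ((y - \<tau>) powr (c + 1) / (c + 1))) b - (\<lambda>\<tau>. - ((y - \<tau>) powr (c + 1) / (c + 1))) a)) {a..b}"
  proof (rule fundamental_theorem_of_calculus_interior[OF ab])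
    show "continuous_on {a..b} (\<lambda>\<tau>. - ((y - \<tau>) powr (c + 1) / (c + 1)))"
      using c hb by (intro continuous_intros continuous_on_powr') auto
    fix x assume x: "x \<in> {a<..<b}"
    hence "0 < y - x" using hb by auto
    thus "((\<lambda>\<tau>. - ((y - \<tau>) powr (c + 1) / (c + 1))) has_vector_derivative (y - x) powr c) (at x)"
      using c unfolding has_real_derivative_iff_has_vector_derivative[symmetric]
      by (auto intro!: derivative_eq_intros simp: powr_diff)
  qed
  thus ?thesis by (simp add: has_integral_Icc_iff_Ioo diff_divide_distrib)
qed

locale jac_setup =
  fixes mu nu :: real
  assumes mu: "-1 < mu" "mu < 0" and nu: "-1 < nu" "nu < 0" and mn: "-1 < mu + nu"
begin

definition "cc = -1 - mu - nu"

lemma cc: "-1 < cc" "cc < 0" using mu nu mn by (auto simp: cc_def)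

definition "gg m y = y powr nu * (1 - y) powr mu * (1 - y) ^ m"

lemma gg_nonneg: "0 \<le> gg m y" if "y < 1" for y using that by (simp add: gg_def)

lemma gg_le: "gg m y \<le> y powr nu * (1 - y) powr mu" if "0 < y" "y < 1" for y
proof -
  have "(1 - y) ^ m \<le> 1" using that by (intro power_le_one) auto
  thus ?thesis unfolding gg_def using that by (intro mult_left_le) auto
qed

lemma IL: assumes t: "0 < t" "t < 1"
  shows "set_integrable lborel {0<..<t} (\<lambda>y. (t - y) powr cc * gg m y)"
proof (rule set_integrable_bound[OF base_identity(1)[OF mu nu mn t]])
  show "set_borel_measurable lborel {0<..<t} (\<lambda>y. (t - y) powr cc * gg m y)"
    unfolding set_borel_measurable_def gg_def by measurable
  show "AE x in lborel. x \<in> {0<..<t} \<longrightarrow> norm ((t - x) powr cc * gg m x) \<le> norm ((t - x) powr (- 1 - mu - nu) * x powr nu * (1 - x) powr mu)"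
  proof (rule AE_I2, intro impI)
    fix x assume x: "x \<in> {0<..<t}"
    hence "gg m x \<le> x powr nu * (1 - x) powr mu" "0 \<le> gg m x" using t by (auto intro!: gg_le gg_nonneg)
    thus "norm ((t - x) powr cc * gg m x) \<le> norm ((t - x) powr (- 1 - mu - nu) * x powr nu * (1 - x) powr mu)"
      using x by (auto simp: cc_def abs_mult mult.assoc intro!: mult_left_mono)
  qed
qed

lemma IR: assumes t: "0 < t" "t < 1"
  shows "set_integrable lborel {t<..<1} (\<lambda>y. (y - t) powr cc * gg m y)"
proof (rule set_integrable_bound[OF base_identity(2)[OF mu nu mn t]])
  show "set_borel_measurable lborel {t<..<1} (\<lambda>y. (y - t) powr cc * gg m y)"
    unfolding set_borel_measurable_def gg_def by measurable
  show "AE x in lborel. x \<in> {t<..<1} \<longrightarrow> norm ((x - t) powr cc * gg m x) \<le> norm ((x - t) powr (- 1 - mu - nu) * x powr nu * (1 - x) powr mu)"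
  proof (rule AE_I2, intro impI)
    fix x assume x: "x \<in> {t<..<1}"
    hence "gg m x \<le> x powr nu * (1 - x) powr mu" "0 \<le> gg m x" using t by (auto intro!: gg_le gg_nonneg)
    thus "norm ((x - t) powr cc * gg m x) \<le> norm ((x - t) powr (- 1 - mu - nu) * x powr nu * (1 - x) powr mu)"
      using x by (auto simp: cc_def abs_mult mult.assoc intro!: mult_left_mono)
  qed
qed

lemma IL1: assumes t: "0 < t" "t < 1"
  shows "set_integrable lborel {0<..<t} (\<lambda>y. (t - y) powr (cc + 1) * gg m y)"
proof (rule set_integrable_bound[OF IL[OF t, of m]])
  show "set_borel_measurable lborel {0<..<t} (\<lambda>y. (t - y) powr (cc + 1) * gg m y)"
    unfolding set_borel_measurable_def gg_def by measurable
  show "AE x in lborel. x \<in> {0<..<t} \<longrightarrow> norm ((t - x) powr (cc + 1) * gg m x) \<le> norm ((t - x) powr cc * gg m x)"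
  proof (rule AE_I2, intro impI)
    fix x assume x: "x \<in> {0<..<t}"
    have "(t - x) powr (cc + 1) = (t - x) powr cc * (t - x)" using x by (simp add: powr_add)
    also have "\<dots> \<le> (t - x) powr cc" using x t by (intro mult_left_le) auto
    finally show "norm ((t - x) powr (cc + 1) * gg m x) \<le> norm ((t - x) powr cc * gg m x)"
      using x t gg_nonneg[of x m] by (auto simp: abs_mult intro!: mult_right_mono)
  qed
qed

lemma IR1: assumes t: "0 < t" "t < 1"
  shows "set_integrable lborel {t<..<1} (\<lambda>y. (y - t) powr (cc + 1) * gg m y)"
proof (rule set_integrable_bound[OF IR[OF t, of m]])
  show "set_borel_measurable lborel {t<..<1} (\<lambda>y. (y - t) powr (cc + 1) * gg m y)"
    unfolding set_borel_measurable_def gg_def by measurable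
  show "AE x in lborel. x \<in> {t<..<1} \<longrightarrow> norm ((x - t) powr (cc + 1) * gg m x) \<le> norm ((x - t) powr cc * gg m x)"
  proof (rule AE_I2, intro impI)
    fix x assume x: "x \<in> {t<..<1}"
    have "(x - t) powr (cc + 1) = (x - t) powr cc * (x - t)" using x by (simp add: powr_add)
    also have "\<dots> \<le> (x - t) powr cc" using x t by (intro mult_left_le) auto
    finally show "norm ((x - t) powr (cc + 1) * gg m x) \<le> norm ((x - t) powr cc * gg m x)"
      using x t gg_nonneg[of x m] by (auto simp: abs_mult intro!: mult_right_mono)
  qed
qed

end

context jac_setup begin

definition "Lf m t = (LINT y:{0<..<t}|lborel. (t - y) powr cc * gg m y)"
definition "Rf m t = (LINT y:{t<..<1}|lborel. (y - t) powr cc * gg m y)"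

lemma Lf_meas: "Lf m \<in> borel_measurable lborel"
  unfolding Lf_def set_lebesgue_integral_def gg_def indicator_def of_bool_def greaterThanLessThan_iff
  by measurable

lemma Rf_meas: "Rf m \<in> borel_measurable lborel"
  unfolding Rf_def set_lebesgue_integral_def gg_def indicator_def of_bool_def greaterThanLessThan_iff
  by measurable

lemma T1:
  assumes t: "0 < t" "t < 1"
  shows "set_integrable lborel {0<..<t} (Lf m)"
    and "(LINT \<tau>:{0<..<t}|lborel. Lf m \<tau>) = (LINT y:{0<..<t}|lborel. (t - y) powr (cc + 1) * gg m y) / (cc + 1)"
proof -
  have c1: "0 < cc + 1" using cc by simp
  define F where "F = (\<lambda>\<tau> y::real. ennreal (indicator {0<..<t} \<tau> * indicator {0<..<\<tau>} y * ((\<tau> - y) powr cc * gg m y)))"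
  have Fub: "(\<integral>\<^sup>+\<tau>. (\<integral>\<^sup>+y. F \<tau> y \<partial>lborel) \<partial>lborel) = (\<integral>\<^sup>+y. (\<integral>\<^sup>+\<tau>. F \<tau> y \<partial>lborel) \<partial>lborel)"
    by (rule lborel_pair.Fubini'[symmetric])
       (unfold F_def case_prod_unfold gg_def indicator_def of_bool_def greaterThanLessThan_iff, measurable)
  have in1: "(\<integral>\<^sup>+y. F \<tau> y \<partial>lborel) = ennreal (indicator {0<..<t} \<tau> * Lf m \<tau>)" for \<tau>
  proof (cases "\<tau> \<in> {0<..<t}")
    case False thus ?thesis by (simp add: F_def)
  next
    case True
    hence \<tau>: "0 < \<tau>" "\<tau> < 1" using t by auto
    have "(\<integral>\<^sup>+y. F \<tau> y \<partial>lborel) = (\<integral>\<^sup>+y. ennreal (indicator {0<..<\<tau>} y * ((\<tau> - y) powr cc * gg m y)) \<partial>lborel)"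
      using True by (simp add: F_def)
    also have "\<dots> = ennreal (Lf m \<tau>)" unfolding Lf_def
      by (rule nn_of_set[OF IL[OF \<tau>]]) (use \<tau> in \<open>auto intro!: mult_nonneg_nonneg gg_nonneg\<close>)
    finally show ?thesis using True by simp
  qed
  have in2: "(\<integral>\<^sup>+\<tau>. F \<tau> y \<partial>lborel) = ennreal (indicator {0<..<t} y * ((t - y) powr (cc + 1) * gg m y / (cc + 1)))" for y
  proof (cases "y \<in> {0<..<t}")
    case False
    hence "F \<tau> y = 0" for \<tau> by (auto simp: F_def indicator_def)
    thus ?thesis using False by simp
  next
    case True
    hence y: "0 < y" "y < t" by auto
    have "(\<integral>\<^sup>+\<tau>. F \<tau> y \<partial>lborel) = (\<integral>\<^sup>+\<tau>. ennreal (gg m y) * ennreal (indicator {y<..<t} \<tau> * (\<tau> - y) powr cc) \<partial>lborel)"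
      using y t gg_nonneg[of y m]
      by (intro nn_integral_cong) (auto simp: F_def indicator_def ennreal_mult'[symmetric] mult_ac)
    also have "\<dots> = ennreal (gg m y) * (\<integral>\<^sup>+\<tau>. ennreal (indicator {y<..<t} \<tau> * (\<tau> - y) powr cc) \<partial>lborel)"
      by (rule nn_integral_cmult) measurable
    also have "(\<integral>\<^sup>+\<tau>. ennreal (indicator {y<..<t} \<tau> * (\<tau> - y) powr cc) \<partial>lborel) = ennreal ((t - y) powr (cc + 1) / (cc + 1))"
    proof -
      have "((\<lambda>\<tau>. (\<tau> - y) powr cc) has_integral ((t - y) powr (cc + 1) - (y - y) powr (cc + 1)) / (cc + 1)) {y<..<t}"
        using y cc by (intro ftc_left) auto
      hence "((\<lambda>\<tau>. (\<tau> - y) powr cc) has_integral (t - y) powr (cc + 1) / (cc + 1)) {y<..<t}" by simp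
      from nn_integral_has_integral_lebesgue[OF _ this] show ?thesis by simp
    qed
    also have "ennreal (gg m y) * ennreal ((t - y) powr (cc + 1) / (cc + 1)) = ennreal (indicator {0<..<t} y * ((t - y) powr (cc + 1) * gg m y / (cc + 1)))"
      using True y t c1 gg_nonneg[of y m] by (subst ennreal_mult'[symmetric]) (auto simp: mult_ac)
    finally show ?thesis .
  qed
  have I1: "set_integrable lborel {0<..<t} (\<lambda>y. (t - y) powr (cc + 1) * gg m y / (cc + 1))"
    using IL1[OF t, of m] by (rule set_integrable_divide)
  have "(\<integral>\<^sup>+\<tau>. ennreal (indicator {0<..<t} \<tau> * Lf m \<tau>) \<partial>lborel) =
        ennreal (LINT y:{0<..<t}|lborel. (t - y) powr (cc + 1) * gg m y / (cc + 1))"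
    unfolding in1[symmetric] Fub in2
    by (rule nn_of_set[OF I1]) (use t c1 in \<open>auto intro!: mult_nonneg_nonneg divide_nonneg_pos gg_nonneg\<close>)
  note R = set_of_nn[OF _ _ this]
  have Lnn: "0 \<le> Lf m \<tau>" if "\<tau> \<in> {0<..<t}" for \<tau>
    unfolding Lf_def using that t
    by (intro set_integral_nonneg') (auto intro!: mult_nonneg_nonneg gg_nonneg)
  have v: "0 \<le> (LINT y:{0<..<t}|lborel. (t - y) powr (cc + 1) * gg m y / (cc + 1))"
    using t c1 by (intro set_integral_nonneg') (auto intro!: mult_nonneg_nonneg divide_nonneg_pos gg_nonneg)
  have ms: "set_borel_measurable lborel {0<..<t} (Lf m)"
    unfolding set_borel_measurable_def using Lf_meas by measurable
  show "set_integrable lborel {0<..<t} (Lf m)" by (rule R(1)[OF ms Lnn v])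
  show "(LINT \<tau>:{0<..<t}|lborel. Lf m \<tau>) = (LINT y:{0<..<t}|lborel. (t - y) powr (cc + 1) * gg m y) / (cc + 1)"
    using R(2)[OF ms Lnn v] by simp
qed

lemma Ibeta:
  shows "set_integrable lborel {0<..<1} (\<lambda>y. y powr (cc + 1) * gg m y)"
    and "(LINT y:{0<..<1}|lborel. y powr (cc + 1) * gg m y) = Beta (1 - mu) (mu + m + 1)"
proof -
  have eq: "y powr (cc + 1) * gg m y = y powr ((1 - mu) - 1) * (1 - y) powr ((mu + m + 1) - 1)"
    if "y \<in> {0<..<1}" for y
  proof -
    have y: "0 < y" "0 < 1 - y" using that by auto
    have "y powr (cc + 1) * y powr nu = y powr ((1 - mu) - 1)" using y by (simp add: cc_def flip: powr_add)
    moreover have "(1 - y) powr mu * (1 - y) ^ m = (1 - y) powr ((mu + m + 1) - 1)"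
      using y by (simp add: powr_realpow[symmetric] powr_add)
    ultimately show ?thesis by (simp add: gg_def mult_ac)
  qed
  have ab: "0 < 1 - mu" "0 < mu + m + 1" using mu by auto
  have e01: "einterval 0 1 = {0::real<..<1}" by (auto simp: einterval_def zero_ereal_def one_ereal_def)
  note B = Beta_LBINT[OF ab]
  show "set_integrable lborel {0<..<1} (\<lambda>y. y powr (cc + 1) * gg m y)"
    using B(2) unfolding e01 by (rule set_integrable_cong[THEN iffD1, rotated -1]) (auto simp: eq)
  have "(LINT y:{0<..<1}|lborel. y powr (cc + 1) * gg m y) = (LINT y:{0<..<1}|lborel. y powr ((1 - mu) - 1) * (1 - y) powr ((mu + m + 1) - 1))"
    by (rule set_lebesgue_integral_cong) (auto simp: eq)
  also have "\<dots> = Beta (1 - mu) (mu + m + 1)"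
    using B(1) by (simp add: interval_lebesgue_integral_def e01)
  finally show "(LINT y:{0<..<1}|lborel. y powr (cc + 1) * gg m y) = Beta (1 - mu) (mu + m + 1)" .
qed

lemma set_integral_sub_indicator:
  fixes f :: "real \<Rightarrow> real"
  assumes "B \<subseteq> A"
  shows "set_integrable lborel B f \<Longrightarrow> set_integrable lborel A (\<lambda>y. indicator B y * f y)"
    and "(LINT y:A|lborel. indicator B y * f y) = (LINT y:B|lborel. f y)"
proof -
  have e: "(\<lambda>y. indicator A y *\<^sub>R (indicator B y * f y)) = (\<lambda>y. indicator B y *\<^sub>R f y)"
    using assms by (auto simp: indicator_def fun_eq_iff)
  show "set_integrable lborel B f \<Longrightarrow> set_integrable lborel A (\<lambda>y. indicator B y * f y)"
    unfolding set_integrable_def e .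
  show "(LINT y:A|lborel. indicator B y * f y) = (LINT y:B|lborel. f y)"
    unfolding set_lebesgue_integral_def e ..
qed

lemma T2:
  assumes t: "0 < t" "t < 1"
  shows "set_integrable lborel {0<..<t} (Rf m)"
    and "(LINT \<tau>:{0<..<t}|lborel. Rf m \<tau>) =
          ((LINT y:{0<..<1}|lborel. y powr (cc + 1) * gg m y) - (LINT y:{t<..<1}|lborel. (y - t) powr (cc + 1) * gg m y)) / (cc + 1)"
proof -
  have c1: "0 < cc + 1" using cc by simp
  define h where "h = (\<lambda>y::real. (y powr (cc + 1) - (if t < y then (y - t) powr (cc + 1) else 0)) / (cc + 1))"
  define F where "F = (\<lambda>\<tau> y::real. ennreal (indicator {0<..<t} \<tau> * indicator {\<tau><..<1} y * ((y - \<tau>) powr cc * gg m y)))"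
  have Fub: "(\<integral>\<^sup>+\<tau>. (\<integral>\<^sup>+y. F \<tau> y \<partial>lborel) \<partial>lborel) = (\<integral>\<^sup>+y. (\<integral>\<^sup>+\<tau>. F \<tau> y \<partial>lborel) \<partial>lborel)"
    by (rule lborel_pair.Fubini'[symmetric])
       (unfold F_def case_prod_unfold gg_def indicator_def of_bool_def greaterThanLessThan_iff, measurable)
  have in1: "(\<integral>\<^sup>+y. F \<tau> y \<partial>lborel) = ennreal (indicator {0<..<t} \<tau> * Rf m \<tau>)" for \<tau>
  proof (cases "\<tau> \<in> {0<..<t}")
    case False thus ?thesis by (simp add: F_def)
  next
    case True
    hence \<tau>: "0 < \<tau>" "\<tau> < 1" using t by auto
    have "(\<integral>\<^sup>+y. F \<tau> y \<partial>lborel) = (\<integral>\<^sup>+y. ennreal (indicator {\<tau><..<1} y * ((y - \<tau>) powr cc * gg m y)) \<partial>lborel)"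
      using True by (simp add: F_def)
    also have "\<dots> = ennreal (Rf m \<tau>)" unfolding Rf_def
      by (rule nn_of_set[OF IR[OF \<tau>]]) (use \<tau> in \<open>auto intro!: mult_nonneg_nonneg gg_nonneg\<close>)
    finally show ?thesis using True by simp
  qed
  have hnn: "0 \<le> h y" if "0 < y" for y
  proof (cases "t < y")
    case True
    have "(y - t) powr (cc + 1) \<le> y powr (cc + 1)" using True t c1 by (intro powr_mono2) auto
    thus ?thesis using True c1 by (simp add: h_def)
  next
    case False thus ?thesis using c1 by (simp add: h_def)
  qed
  have in2: "(\<integral>\<^sup>+\<tau>. F \<tau> y \<partial>lborel) = ennreal (indicator {0<..<1} y * (gg m y * h y))" for y
  proof (cases "y \<in> {0<..<1}")
    case False
    hence "F \<tau> y = 0" for \<tau> by (auto simp: F_def indicator_def)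
    thus ?thesis using False by simp
  next
    case True
    hence y: "0 < y" "y < 1" by auto
    define b where "b = min t y"
    have b: "0 < b" "b \<le> y" "b \<le> t" using y t by (auto simp: b_def)
    have "(\<integral>\<^sup>+\<tau>. F \<tau> y \<partial>lborel) = (\<integral>\<^sup>+\<tau>. ennreal (gg m y) * ennreal (indicator {0<..<b} \<tau> * (y - \<tau>) powr cc) \<partial>lborel)"
      using y t gg_nonneg[of y m]
      by (intro nn_integral_cong) (auto simp: F_def b_def indicator_def ennreal_mult'[symmetric] mult_ac)
    also have "\<dots> = ennreal (gg m y) * (\<integral>\<^sup>+\<tau>. ennreal (indicator {0<..<b} \<tau> * (y - \<tau>) powr cc) \<partial>lborel)"
      by (rule nn_integral_cmult) measurable
    also have "(\<integral>\<^sup>+\<tau>. ennreal (indicator {0<..<b} \<tau> * (y - \<tau>) powr cc) \<partial>lborel) = ennreal (h y)"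
    proof -
      have "((\<lambda>\<tau>. (y - \<tau>) powr cc) has_integral ((y - 0) powr (cc + 1) - (y - b) powr (cc + 1)) / (cc + 1)) {0<..<b}"
        using b cc by (intro ftc_right) auto
      moreover have "((y - 0) powr (cc + 1) - (y - b) powr (cc + 1)) / (cc + 1) = h y"
        by (auto simp: h_def b_def min_def)
      ultimately have "((\<lambda>\<tau>. (y - \<tau>) powr cc) has_integral h y) {0<..<b}" by simp
      from nn_integral_has_integral_lebesgue[OF _ this] show ?thesis by simp
    qed
    also have "ennreal (gg m y) * ennreal (h y) = ennreal (indicator {0<..<1} y * (gg m y * h y))"
      using True y hnn[of y] gg_nonneg[of y m] by (subst ennreal_mult'[symmetric]) (auto simp: mult_ac)
    finally show ?thesis .
  qed
  define Y where "Y = (LINT y:{0<..<1}|lborel. y powr (cc + 1) * gg m y)"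
  define R1 where "R1 = (LINT y:{t<..<1}|lborel. (y - t) powr (cc + 1) * gg m y)"
  have hsplit: "gg m y * h y = y powr (cc + 1) * gg m y / (cc + 1) - indicator {t<..<1} y * ((y - t) powr (cc + 1) * gg m y / (cc + 1))"
    if "y \<in> {0<..<1}" for y
    using that c1 by (auto simp: h_def indicator_def diff_divide_distrib right_diff_distrib mult_ac)
  have IA: "set_integrable lborel {0<..<1} (\<lambda>y. y powr (cc + 1) * gg m y / (cc + 1))"
    using Ibeta(1)[of m] by (rule set_integrable_divide)
  have IB: "set_integrable lborel {0<..<1} (\<lambda>y. indicator {t<..<1} y * ((y - t) powr (cc + 1) * gg m y / (cc + 1)))"
    using t by (intro set_integral_sub_indicator(1) set_integrable_divide IR1) auto
  have IH: "set_integrable lborel {0<..<1} (\<lambda>y. gg m y * h y)"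
    using set_integral_diff(1)[OF IA IB] by (rule set_integrable_cong[THEN iffD1, rotated -1]) (auto simp: hsplit)
  have valH: "(LINT y:{0<..<1}|lborel. gg m y * h y) = (Y - R1) / (cc + 1)"
  proof -
    have "(LINT y:{0<..<1}|lborel. gg m y * h y) = (LINT y:{0<..<1}|lborel. y powr (cc + 1) * gg m y / (cc + 1) - indicator {t<..<1} y * ((y - t) powr (cc + 1) * gg m y / (cc + 1)))"
      by (rule set_lebesgue_integral_cong) (auto simp: hsplit)
    also have "\<dots> = (LINT y:{0<..<1}|lborel. y powr (cc + 1) * gg m y / (cc + 1)) - (LINT y:{0<..<1}|lborel. indicator {t<..<1} y * ((y - t) powr (cc + 1) * gg m y / (cc + 1)))"
      by (rule set_integral_diff(2)[OF IA IB])
    also have "(LINT y:{0<..<1}|lborel. indicator {t<..<1} y * ((y - t) powr (cc + 1) * gg m y / (cc + 1))) = (LINT y:{t<..<1}|lborel. (y - t) powr (cc + 1) * gg m y / (cc + 1))"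
      using t by (intro set_integral_sub_indicator(2)) auto
    also have "(LINT y:{0<..<1}|lborel. y powr (cc + 1) * gg m y / (cc + 1)) - (LINT y:{t<..<1}|lborel. (y - t) powr (cc + 1) * gg m y / (cc + 1)) = Y / (cc + 1) - R1 / (cc + 1)"
      by (simp only: set_integral_divide_zero Y_def R1_def)
    finally show ?thesis by (simp add: diff_divide_distrib)
  qed
  have "(\<integral>\<^sup>+\<tau>. ennreal (indicator {0<..<t} \<tau> * Rf m \<tau>) \<partial>lborel) =
        ennreal (LINT y:{0<..<1}|lborel. gg m y * h y)"
    unfolding in1[symmetric] Fub in2
    by (rule nn_of_set[OF IH]) (auto intro!: mult_nonneg_nonneg hnn gg_nonneg)
  note R = set_of_nn[OF _ _ this]
  have Rnn: "0 \<le> Rf m \<tau>" if "\<tau> \<in> {0<..<t}" for \<tau>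
    unfolding Rf_def using that t
    by (intro set_integral_nonneg') (auto intro!: mult_nonneg_nonneg gg_nonneg)
  have v: "0 \<le> (LINT y:{0<..<1}|lborel. gg m y * h y)"
    by (intro set_integral_nonneg') (auto intro!: mult_nonneg_nonneg hnn gg_nonneg)
  have ms: "set_borel_measurable lborel {0<..<t} (Rf m)"
    unfolding set_borel_measurable_def using Rf_meas by measurable
  show "set_integrable lborel {0<..<t} (Rf m)" by (rule R(1)[OF ms Rnn v])
  show "(LINT \<tau>:{0<..<t}|lborel. Rf m \<tau>) = ((LINT y:{0<..<1}|lborel. y powr (cc + 1) * gg m y) - (LINT y:{t<..<1}|lborel. (y - t) powr (cc + 1) * gg m y)) / (cc + 1)"
    using R(2)[OF ms Rnn v] valH by (simp add: Y_def R1_def)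
qed

end

lemma poly_integral:
  fixes a :: "nat \<Rightarrow> real" and t :: real
  assumes t: "0 < t"
  shows "set_integrable lborel {0<..<t} (\<lambda>\<tau>. \<Sum>j\<le>m. a j * \<tau> ^ j)"
    and "(LINT \<tau>:{0<..<t}|lborel. (\<Sum>j\<le>m. a j * \<tau> ^ j)) = (\<Sum>j\<le>m. a j * t ^ (j + 1) / (j + 1))"
proof -
  have cont: "continuous_on {0..t} (\<lambda>\<tau>. \<Sum>j\<le>m. a j * \<tau> ^ j)" by (intro continuous_intros)
  have I: "set_integrable lborel {0..t} (\<lambda>\<tau>. \<Sum>j\<le>m. a j * \<tau> ^ j)"
    unfolding set_integrable_def by (rule borel_integrable_compact[OF _ cont]) auto
  show I2: "set_integrable lborel {0<..<t} (\<lambda>\<tau>. \<Sum>j\<le>m. a j * \<tau> ^ j)"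
    by (rule set_integrable_subset[OF I]) auto
  have "((\<lambda>\<tau>. \<Sum>j\<le>m. a j * \<tau> ^ j) has_integral
          ((\<lambda>\<tau>. \<Sum>j\<le>m. a j * \<tau> ^ (j + 1) / (j + 1)) t - (\<lambda>\<tau>. \<Sum>j\<le>m. a j * \<tau> ^ (j + 1) / (j + 1)) 0)) {0..t}"
  proof (rule fundamental_theorem_of_calculus)
    show "0 \<le> t" using t by simp
    fix x assume "x \<in> {0..t}"
    have "((\<lambda>\<tau>. \<Sum>j\<le>m. a j * \<tau> ^ (j + 1) / (j + 1)) has_field_derivative (\<Sum>j\<le>m. a j * x ^ j)) (at x within {0..t})"
      by (rule derivative_eq_intros refl | simp add: mult_ac)+
    thus "((\<lambda>\<tau>. \<Sum>j\<le>m. a j * \<tau> ^ (j + 1) / (j + 1)) has_vector_derivative (\<Sum>j\<le>m. a j * x ^ j)) (at x within {0..t})"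
      by (simp add: has_real_derivative_iff_has_vector_derivative)
  qed
  hence "((\<lambda>\<tau>. \<Sum>j\<le>m. a j * \<tau> ^ j) has_integral (\<Sum>j\<le>m. a j * t ^ (j + 1) / (j + 1))) {0<..<t}"
    by (simp add: has_integral_Icc_iff_Ioo)
  moreover have "(LINT \<tau>:{0<..<t}|lborel. (\<Sum>j\<le>m. a j * \<tau> ^ j)) = integral {0<..<t} (\<lambda>\<tau>. \<Sum>j\<le>m. a j * \<tau> ^ j)"
    by (rule set_borel_integral_eq_integral(2)[OF I2])
  ultimately show "(LINT \<tau>:{0<..<t}|lborel. (\<Sum>j\<le>m. a j * \<tau> ^ j)) = (\<Sum>j\<le>m. a j * t ^ (j + 1) / (j + 1))"
    by (simp add: integral_unique)
qed

context jac_setup begin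

lemma Lf_Suc: assumes t: "0 < t" "t < 1"
  shows "Lf (Suc m) t = (1 - t) * Lf m t + (LINT y:{0<..<t}|lborel. (t - y) powr (cc + 1) * gg m y)"
proof -
  have "Lf (Suc m) t = (LINT y:{0<..<t}|lborel. (1 - t) * ((t - y) powr cc * gg m y) + (t - y) powr (cc + 1) * gg m y)"
    unfolding Lf_def
  proof (rule set_lebesgue_integral_cong, simp, intro allI impI)
    fix y assume y: "y \<in> {0<..<t}"
    have h: "(t - y) powr (cc + 1) = (t - y) powr cc * (t - y)" using y by (simp add: powr_add)
    have g: "gg (Suc m) y = gg m y * ((1 - t) + (t - y))" by (simp add: gg_def)
    show "(t - y) powr cc * gg (Suc m) y = (1 - t) * ((t - y) powr cc * gg m y) + (t - y) powr (cc + 1) * gg m y"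
      unfolding g h by (simp add: algebra_simps)
  qed
  also have "\<dots> = (1 - t) * Lf m t + (LINT y:{0<..<t}|lborel. (t - y) powr (cc + 1) * gg m y)"
    using set_integral_add(2)[OF set_integrable_mult_right[OF IL[OF t, of m]] IL1[OF t, of m]]
    by (simp add: Lf_def)
  finally show ?thesis .
qed

lemma Rf_Suc: assumes t: "0 < t" "t < 1"
  shows "Rf (Suc m) t = (1 - t) * Rf m t - (LINT y:{t<..<1}|lborel. (y - t) powr (cc + 1) * gg m y)"
proof -
  have "Rf (Suc m) t = (LINT y:{t<..<1}|lborel. (1 - t) * ((y - t) powr cc * gg m y) - (y - t) powr (cc + 1) * gg m y)"
    unfolding Rf_def
  proof (rule set_lebesgue_integral_cong, simp, intro allI impI)
    fix y assume y: "y \<in> {t<..<1}"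
    have h: "(y - t) powr (cc + 1) = (y - t) powr cc * (y - t)" using y by (simp add: powr_add)
    have g: "gg (Suc m) y = gg m y * ((1 - t) - (y - t))" by (simp add: gg_def)
    show "(y - t) powr cc * gg (Suc m) y = (1 - t) * ((y - t) powr cc * gg m y) - (y - t) powr (cc + 1) * gg m y"
      unfolding g h by (simp add: algebra_simps)
  qed
  also have "\<dots> = (1 - t) * Rf m t - (LINT y:{t<..<1}|lborel. (y - t) powr (cc + 1) * gg m y)"
    using set_integral_diff(2)[OF set_integrable_mult_right[OF IR[OF t, of m]] IR1[OF t, of m]]
    by (simp add: Rf_def)
  finally show ?thesis .
qed

lemma sin_Beta:
  "sin (pi * mu) * Beta (1 - mu) (mu + m + 1) = pi * ((mu + m) gchoose (m + 1))"
proof -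
  have mi: "mu \<notin> \<int>" by (rule not_Int_frac[OF mu])
  have mnp: "mu \<notin> \<int>\<^sub>\<le>\<^sub>0" using mi nonpos_Ints_subset_Ints by blast
  have sm: "sin (pi * mu) \<noteq> 0" using sin_pi_neg[OF mu] by simp
  have G1: "Gamma (mu + real (m + 1)) = pochhammer mu (m + 1) * Gamma mu"
    using pochhammer_Gamma[OF mnp, of "m + 1"] Gamma_eq_zero_iff[of mu] mnp by (simp add: field_simps)
  have G2: "Gamma (1 - mu + (mu + real m + 1)) = fact (m + 1)"
    using Gamma_fact[of "m + 1", where 'a=real] by (simp add: add_ac)
  have R: "Gamma mu * Gamma (1 - mu) = pi / sin (pi * mu)" by (rule Gamma_reflection_real[OF mi])
  have "sin (pi * mu) * Beta (1 - mu) (mu + m + 1) = sin (pi * mu) * (Gamma mu * Gamma (1 - mu)) * pochhammer mu (m + 1) / fact (m + 1)"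
    unfolding Beta_def G2 using G1 by (simp add: add_ac mult_ac)
  also have "\<dots> = pi * (pochhammer mu (m + 1) / fact (m + 1))" unfolding R using sm by simp
  also have "pochhammer mu (m + 1) / fact (m + 1) = (mu + m) gchoose (m + 1)"
    by (simp add: gbinomial_pochhammer')
  finally show ?thesis .
qed

end

lemma gchoose_Suc_ratio:
  fixes c :: real
  shows "(c gchoose Suc j) = (c gchoose j) * (c - j) / (j + 1)"
proof -
  have "of_nat (Suc j) * (c gchoose Suc j) = c * ((c - 1) gchoose j)" by (rule gbinomial_absorption)
  also have "\<dots> = (c - of_nat j) * (c gchoose j)" by (rule gbinomial_absorb_comp[symmetric])
  finally show ?thesis by (simp add: field_simps)
qed

lemma Q_rec_alg:
  fixes a c t :: real and m :: nat
  shows "(\<Sum>j\<le>Suc m. ((a + 1) gchoose (Suc m - j)) * (c gchoose j) * t ^ j) =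
         (1 - t) * (\<Sum>j\<le>m. (a gchoose (m - j)) * (c gchoose j) * t ^ j)
         + (c + 1) * (\<Sum>j\<le>m. (a gchoose (m - j)) * (c gchoose j) * t ^ (j + 1) / (j + 1))
         + (a gchoose (Suc m))"
proof -
  define A where "A = (\<lambda>j. a gchoose (m - j))"
  define B where "B = (\<lambda>j. a gchoose (Suc m - j))"
  have s1: "(\<Sum>j\<le>Suc m. ((a + 1) gchoose (Suc m - j)) * (c gchoose j) * t ^ j) =
            (\<Sum>j\<le>m. ((a + 1) gchoose (Suc (m - j))) * (c gchoose j) * t ^ j) + (c gchoose Suc m) * t ^ Suc m"
    by (simp add: Suc_diff_le)
  have s2: "(\<Sum>j\<le>m. ((a + 1) gchoose (Suc (m - j))) * (c gchoose j) * t ^ j) =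
            (\<Sum>j\<le>m. A j * (c gchoose j) * t ^ j) + (\<Sum>j\<le>m. B j * (c gchoose j) * t ^ j)"
  proof -
    have "(\<Sum>j\<le>m. ((a + 1) gchoose (Suc (m - j))) * (c gchoose j) * t ^ j) =
          (\<Sum>j\<le>m. A j * (c gchoose j) * t ^ j + B j * (c gchoose j) * t ^ j)"
    proof (rule sum.cong[OF refl])
      fix j assume j: "j \<in> {..m}"
      have "B j = a gchoose Suc (m - j)" using j by (simp add: B_def Suc_diff_le)
      thus "((a + 1) gchoose (Suc (m - j))) * (c gchoose j) * t ^ j = A j * (c gchoose j) * t ^ j + B j * (c gchoose j) * t ^ j"
        unfolding gbinomial_Suc_Suc by (simp add: A_def algebra_simps)
    qed
    thus ?thesis by (simp add: sum.distrib)
  qed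
  have s3: "(\<Sum>j\<le>m. B j * (c gchoose j) * t ^ j) + (c gchoose Suc m) * t ^ Suc m =
            (\<Sum>j\<le>Suc m. B j * (c gchoose j) * t ^ j)"
    by (simp add: B_def)
  have s4: "(\<Sum>j\<le>Suc m. B j * (c gchoose j) * t ^ j) = (a gchoose Suc m) + (\<Sum>j\<le>m. A j * (c gchoose Suc j) * t ^ Suc j)"
    by (subst sum.atMost_Suc_shift) (simp add: A_def B_def)
  have s5: "(\<Sum>j\<le>m. A j * (c gchoose Suc j) * t ^ Suc j) =
            (c + 1) * (\<Sum>j\<le>m. A j * (c gchoose j) * t ^ (j + 1) / (j + 1)) - t * (\<Sum>j\<le>m. A j * (c gchoose j) * t ^ j)"
  proof -
    have "(\<Sum>j\<le>m. A j * (c gchoose Suc j) * t ^ Suc j) =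
          (\<Sum>j\<le>m. (c + 1) * (A j * (c gchoose j) * t ^ (j + 1) / (j + 1)) - t * (A j * (c gchoose j) * t ^ j))"
    proof (rule sum.cong[OF refl])
      fix j assume "j \<in> {..m}"
      have e: "(c gchoose Suc j) = (c gchoose j) * ((c + 1) / (j + 1) - 1)"
        unfolding gchoose_Suc_ratio by (simp add: field_simps)
      show "A j * (c gchoose Suc j) * t ^ Suc j = (c + 1) * (A j * (c gchoose j) * t ^ (j + 1) / (j + 1)) - t * (A j * (c gchoose j) * t ^ j)"
        unfolding e by (simp add: field_simps)
    qed
    also have "\<dots> = (c + 1) * (\<Sum>j\<le>m. A j * (c gchoose j) * t ^ (j + 1) / (j + 1)) - t * (\<Sum>j\<le>m. A j * (c gchoose j) * t ^ j)"
      by (simp add: sum_subtractf sum_distrib_left)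
    finally show ?thesis .
  qed
  show ?thesis
    unfolding s1 s2 add.assoc s3 s4 s5 by (simp add: A_def algebra_simps)
qed

context jac_setup begin

definition "Qf m t = (\<Sum>j\<le>m. ((mu + real m) gchoose (m - j)) * (cc gchoose j) * t ^ j)"

lemma Qf_Suc: "Qf (Suc m) t = (1 - t) * Qf m t
   + (cc + 1) * (\<Sum>j\<le>m. ((mu + real m) gchoose (m - j)) * (cc gchoose j) * t ^ (j + 1) / (j + 1))
   + ((mu + real m) gchoose (Suc m))"
  using Q_rec_alg[of "mu + real m" m cc t] unfolding Qf_def by (simp add: add_ac)

end

context jac_setup begin

lemma Pform:
  assumes t: "0 < t" "t < 1"
  shows "sin (pi * nu) * Lf m t + sin (pi * mu) * Rf m t = - pi * Qf m t"
  using t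
proof (induction m arbitrary: t)
  case 0
  hence t: "0 < t" "t < 1" by auto
  have "sin (pi * nu) * Lf 0 t + sin (pi * mu) * Rf 0 t = - pi"
    using base_identity(3)[OF mu nu mn t] by (simp add: Lf_def Rf_def gg_def cc_def mult.assoc)
  thus ?case by (simp add: Qf_def)
next
  case (Suc m)
  hence t: "0 < t" "t < 1" by auto
  define a where "a = (\<lambda>j. ((mu + real m) gchoose (m - j)) * (cc gchoose j))"
  define L1 where "L1 = (LINT y:{0<..<t}|lborel. (t - y) powr (cc + 1) * gg m y)"
  define R1 where "R1 = (LINT y:{t<..<1}|lborel. (y - t) powr (cc + 1) * gg m y)"
  define Y where "Y = (LINT y:{0<..<1}|lborel. y powr (cc + 1) * gg m y)"
  have c1: "cc + 1 \<noteq> 0" using cc by simp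
  have "(LINT \<tau>:{0<..<t}|lborel. sin (pi * nu) * Lf m \<tau> + sin (pi * mu) * Rf m \<tau>) =
        sin (pi * nu) * (LINT \<tau>:{0<..<t}|lborel. Lf m \<tau>) + sin (pi * mu) * (LINT \<tau>:{0<..<t}|lborel. Rf m \<tau>)"
    using set_integral_add(2)[OF set_integrable_mult_right[OF T1(1)[OF t, of m]] set_integrable_mult_right[OF T2(1)[OF t, of m]]]
    by simp
  also have "\<dots> = sin (pi * nu) * (L1 / (cc + 1)) + sin (pi * mu) * ((Y - R1) / (cc + 1))"
    unfolding T1(2)[OF t] T2(2)[OF t] L1_def R1_def Y_def ..
  finally have e1: "(LINT \<tau>:{0<..<t}|lborel. sin (pi * nu) * Lf m \<tau> + sin (pi * mu) * Rf m \<tau>) =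
        sin (pi * nu) * (L1 / (cc + 1)) + sin (pi * mu) * ((Y - R1) / (cc + 1))" .
  have "(LINT \<tau>:{0<..<t}|lborel. sin (pi * nu) * Lf m \<tau> + sin (pi * mu) * Rf m \<tau>) =
        (LINT \<tau>:{0<..<t}|lborel. - pi * (\<Sum>j\<le>m. a j * \<tau> ^ j))"
  proof (rule set_lebesgue_integral_cong, simp, intro allI impI)
    fix \<tau> assume "\<tau> \<in> {0<..<t}"
    hence "0 < \<tau>" "\<tau> < 1" using t by auto
    thus "sin (pi * nu) * Lf m \<tau> + sin (pi * mu) * Rf m \<tau> = - pi * (\<Sum>j\<le>m. a j * \<tau> ^ j)"
      using Suc.IH by (simp add: Qf_def a_def mult.assoc)
  qed
  also have "\<dots> = - pi * (\<Sum>j\<le>m. a j * t ^ (j + 1) / (j + 1))"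
    by (subst set_integral_mult_right) (use poly_integral(2)[OF t(1), of a m] in simp)
  finally have e1b: "sin (pi * nu) * (L1 / (cc + 1)) + sin (pi * mu) * ((Y - R1) / (cc + 1)) = - pi * (\<Sum>j\<le>m. a j * t ^ (j + 1) / (j + 1))"
    using e1 by simp
  define S where "S = (\<Sum>j\<le>m. a j * t ^ (j + 1) / (j + 1))"
  have "(cc + 1) * (sin (pi * nu) * (L1 / (cc + 1)) + sin (pi * mu) * ((Y - R1) / (cc + 1))) = sin (pi * nu) * L1 + sin (pi * mu) * (Y - R1)"
    using c1 by (simp add: distrib_left)
  hence e2: "sin (pi * nu) * L1 - sin (pi * mu) * R1 = (cc + 1) * (- pi * S) - sin (pi * mu) * Y"
    unfolding e1b S_def[symmetric] by (simp add: algebra_simps)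
  have e3: "sin (pi * mu) * Y = pi * ((mu + m) gchoose (m + 1))"
    unfolding Y_def Ibeta(2) by (rule sin_Beta)
  have "sin (pi * nu) * Lf (Suc m) t + sin (pi * mu) * Rf (Suc m) t =
        (1 - t) * (sin (pi * nu) * Lf m t + sin (pi * mu) * Rf m t) + (sin (pi * nu) * L1 - sin (pi * mu) * R1)"
    unfolding Lf_Suc[OF t] Rf_Suc[OF t] L1_def R1_def by (simp add: algebra_simps)
  also have "\<dots> = - pi * ((1 - t) * Qf m t + (cc + 1) * (\<Sum>j\<le>m. a j * t ^ (j + 1) / (j + 1)) + ((mu + m) gchoose (Suc m)))"
    unfolding e2 Suc.IH[OF t] using e3 by (simp add: algebra_simps S_def)
  also have "\<dots> = - pi * Qf (Suc m) t"
    unfolding Qf_Suc a_def by (simp add: mult.assoc)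
  finally show ?case .
qed

end

lemma trinom:
  fixes r :: real and m k :: nat
  assumes "k \<le> m"
  shows "(r gchoose m) * real (m choose k) = (r gchoose k) * ((r - k) gchoose (m - k))"
  using gbinomial_trinomial_revision[OF assms, of r] by (simp add: binomial_gbinomial)

lemma sum_triangle_swap:
  fixes f :: "nat \<Rightarrow> nat \<Rightarrow> real"
  shows "(\<Sum>k\<le>n. \<Sum>i\<le>n - k. f k i) = (\<Sum>s\<le>n. \<Sum>k\<le>s. f k (s - k))"
proof -
  have "(\<Sum>k\<le>n. \<Sum>i\<le>n - k. f k i) = (\<Sum>(k, i)\<in>Sigma {..n} (\<lambda>k. {..n - k}). f k i)"
    by (rule sum.Sigma) auto
  also have "Sigma {..n} (\<lambda>k. {..n - k}) = {(k, i). k + i \<le> n}" by auto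
  also have "(\<Sum>(k, i)\<in>{(k, i). k + i \<le> n}. f k i) = (\<Sum>s\<le>n. \<Sum>k\<le>s. f k (s - k))"
    by (rule sum.triangle_reindex_eq)
  finally show ?thesis .
qed

lemma jacobiP_onesided:
  fixes a b x :: real
  shows "jacobiP n a b x = (\<Sum>s\<le>n. ((n + a) gchoose (n - s)) * ((n + a + b + s) gchoose s) * ((x - 1) / 2) ^ s)"
proof -
  define u where "u = (x - 1) / 2"
  have xp: "(x + 1) / 2 = u + 1" by (simp add: u_def field_simps)
  have "jacobiP n a b x = (\<Sum>k\<le>n. ((n + a) gchoose (n - k)) * ((n + b) gchoose k) * u ^ k * (u + 1) ^ (n - k))"
    unfolding jacobiP_def xp u_def ..
  also have "\<dots> = (\<Sum>k\<le>n. \<Sum>i\<le>n - k. ((n + a) gchoose (n - k)) * ((n + b) gchoose k) * real ((n - k) choose i) * u ^ (k + i))"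
  proof (rule sum.cong[OF refl])
    fix k assume "k \<in> {..n}"
    have "(u + 1) ^ (n - k) = (\<Sum>i\<le>n - k. real ((n - k) choose i) * u ^ i)"
      by (subst binomial_ring) simp
    thus "((n + a) gchoose (n - k)) * ((n + b) gchoose k) * u ^ k * (u + 1) ^ (n - k) =
          (\<Sum>i\<le>n - k. ((n + a) gchoose (n - k)) * ((n + b) gchoose k) * real ((n - k) choose i) * u ^ (k + i))"
      by (simp add: sum_distrib_left power_add mult_ac)
  qed
  also have "\<dots> = (\<Sum>s\<le>n. \<Sum>k\<le>s. ((n + a) gchoose (n - k)) * ((n + b) gchoose k) * real ((n - k) choose (s - k)) * u ^ (k + (s - k)))"
    by (rule sum_triangle_swap)
  also have "\<dots> = (\<Sum>s\<le>n. ((n + a) gchoose (n - s)) * ((n + a + b + s) gchoose s) * u ^ s)"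
  proof (rule sum.cong[OF refl])
    fix s assume s: "s \<in> {..n}"
    have "(\<Sum>k\<le>s. ((n + a) gchoose (n - k)) * ((n + b) gchoose k) * real ((n - k) choose (s - k)) * u ^ (k + (s - k))) =
          (\<Sum>k\<le>s. ((n + a) gchoose (n - s)) * (((n + b) gchoose k) * ((a + s) gchoose (s - k))) * u ^ s)"
    proof (rule sum.cong[OF refl])
      fix k assume k: "k \<in> {..s}"
      have sym: "(n - k) choose (s - k) = (n - k) choose (n - s)"
        using k s by (subst binomial_symmetric) (auto simp: diff_diff_left)
      have tr: "((n + a) gchoose (n - k)) * real ((n - k) choose (n - s)) = ((n + a) gchoose (n - s)) * ((n + a - real (n - s)) gchoose (n - k - (n - s)))"
        using k s by (intro trinom) auto
      have e1: "n + a - real (n - s) = a + s" using s by (simp add: of_nat_diff)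
      have e2: "n - k - (n - s) = s - k" using k s by auto
      show "((n + a) gchoose (n - k)) * ((n + b) gchoose k) * real ((n - k) choose (s - k)) * u ^ (k + (s - k)) =
            ((n + a) gchoose (n - s)) * (((n + b) gchoose k) * ((a + s) gchoose (s - k))) * u ^ s"
        using k tr unfolding sym e1 e2 by (simp add: mult_ac)
    qed
    also have "\<dots> = ((n + a) gchoose (n - s)) * (\<Sum>k\<le>s. ((n + b) gchoose k) * ((a + s) gchoose (s - k))) * u ^ s"
      by (simp add: sum_distrib_left sum_distrib_right mult_ac)
    also have "(\<Sum>k\<le>s. ((n + b) gchoose k) * ((a + s) gchoose (s - k))) = ((n + a + b + s) gchoose s)"
      using gbinomial_Vandermonde[of "n + b" "a + s" s] by (simp add: atLeast0AtMost add_ac)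
    finally show "(\<Sum>k\<le>s. ((n + a) gchoose (n - k)) * ((n + b) gchoose k) * real ((n - k) choose (s - k)) * u ^ (k + (s - k))) =
          ((n + a) gchoose (n - s)) * ((n + a + b + s) gchoose s) * u ^ s" .
  qed
  finally show ?thesis by (simp add: u_def)
qed

lemma jacobiP_sym:
  fixes a b x :: real
  shows "jacobiP n b a x = (-1) ^ n * jacobiP n a b (- x)"
proof -
  have "jacobiP n a b (- x) = (\<Sum>k\<le>n. ((n + a) gchoose (n - k)) * ((n + b) gchoose k) * ((- x - 1) / 2) ^ k * ((- x + 1) / 2) ^ (n - k))"
    unfolding jacobiP_def ..
  also have "\<dots> = (\<Sum>k\<le>n. (-1) ^ n * (((n + a) gchoose (n - k)) * ((n + b) gchoose k) * ((x + 1) / 2) ^ k * ((x - 1) / 2) ^ (n - k)))"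
  proof (rule sum.cong[OF refl])
    fix k assume k: "k \<in> {..n}"
    have e1: "((- x - 1) / 2) ^ k = (-1) ^ k * ((x + 1) / 2) ^ k"
      by (simp flip: power_mult_distrib)
    have e2: "((- x + 1) / 2) ^ (n - k) = (-1) ^ (n - k) * ((x - 1) / 2) ^ (n - k)"
      by (simp flip: power_mult_distrib)
    have e3: "(-1::real) ^ k * (-1) ^ (n - k) = (-1) ^ n"
      using k by (simp flip: power_add)
    show "((n + a) gchoose (n - k)) * ((n + b) gchoose k) * ((- x - 1) / 2) ^ k * ((- x + 1) / 2) ^ (n - k) =
          (-1) ^ n * (((n + a) gchoose (n - k)) * ((n + b) gchoose k) * ((x + 1) / 2) ^ k * ((x - 1) / 2) ^ (n - k))"
      unfolding e1 e2 e3[symmetric] by (simp add: mult_ac)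
  qed
  also have "\<dots> = (-1) ^ n * (\<Sum>k\<le>n. ((n + a) gchoose (n - k)) * ((n + b) gchoose k) * ((x + 1) / 2) ^ k * ((x - 1) / 2) ^ (n - k))"
    by (simp add: sum_distrib_left)
  also have "(\<Sum>k\<le>n. ((n + a) gchoose (n - k)) * ((n + b) gchoose k) * ((x + 1) / 2) ^ k * ((x - 1) / 2) ^ (n - k)) =
             (\<Sum>k\<le>n. ((n + a) gchoose k) * ((n + b) gchoose (n - k)) * ((x + 1) / 2) ^ (n - k) * ((x - 1) / 2) ^ k)"
    using sum.atLeastAtMost_rev[of "\<lambda>k. ((n + a) gchoose (n - k)) * ((n + b) gchoose k) * ((x + 1) / 2) ^ k * ((x - 1) / 2) ^ (n - k)" 0 n]
    by (simp add: atLeast0AtMost)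
  also have "\<dots> = jacobiP n b a x"
    unfolding jacobiP_def by (intro sum.cong refl) (simp add: mult_ac)
  finally show ?thesis by simp
qed

lemma sum_triangle_swap':
  fixes g :: "nat \<Rightarrow> nat \<Rightarrow> real"
  shows "(\<Sum>s\<le>n. \<Sum>j\<le>s. g s j) = (\<Sum>j\<le>n. \<Sum>i\<le>n - j. g (j + i) j)"
  using sum_triangle_swap[of "\<lambda>j i. g (j + i) j" n] by simp

lemma neg_gchoose: fixes N :: real shows "(-1) ^ s * ((N + s) gchoose s) = ((- (N + 1)) gchoose s)"
  using gbinomial_minus[of "N + 1" s] by (simp add: add_ac flip: power_add mult_2)

lemma partial_vandermonde:
  fixes A :: real and j n :: nat
  assumes "j \<le> n"
  shows "(\<Sum>i\<le>n - j. real ((n - j) choose (n - j - i)) * (A gchoose (j + i))) = (A + real (n - j)) gchoose n"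
proof -
  have "(A + real (n - j)) gchoose n = (\<Sum>k\<in>{0..n}. (A gchoose k) * (real (n - j) gchoose (n - k)))"
    by (rule gbinomial_Vandermonde[symmetric])
  also have "\<dots> = (\<Sum>k\<in>{0..n}. (A gchoose k) * real ((n - j) choose (n - k)))"
    by (simp add: binomial_gbinomial)
  also have "\<dots> = (\<Sum>k\<in>{j..n}. (A gchoose k) * real ((n - j) choose (n - k)))"
    by (rule sum.mono_neutral_right) (use assms in auto)
  also have "\<dots> = (\<Sum>i\<in>{0..n - j}. (A gchoose (j + i)) * real ((n - j) choose (n - (j + i))))"
  proof -
    have "(\<Sum>k\<in>{j..n}. (A gchoose k) * real ((n - j) choose (n - k))) = (\<Sum>k\<in>{0+j..(n-j)+j}. (A gchoose k) * real ((n - j) choose (n - k)))"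
      using assms by simp
    also have "\<dots> = (\<Sum>i\<in>{0..n-j}. (A gchoose (i + j)) * real ((n - j) choose (n - (i + j))))"
      by (rule sum.shift_bounds_cl_nat_ivl)
    finally show ?thesis by (simp add: add.commute)
  qed
  also have "\<dots> = (\<Sum>i\<le>n - j. real ((n - j) choose (n - j - i)) * (A gchoose (j + i)))"
    by (simp add: atLeast0AtMost mult.commute diff_diff_left)
  finally show ?thesis ..
qed

lemma V_identity:
  fixes mu nu t :: real and n :: nat
  defines "cc \<equiv> -1 - mu - nu"
  shows "(\<Sum>s\<le>n. ((n + mu) gchoose (n - s)) * ((n + mu + nu + s) gchoose s) * (-1) ^ s *
           (\<Sum>j\<le>s. ((mu + s) gchoose (s - j)) * (cc gchoose j) * t ^ j))
       = (cc gchoose n) * (\<Sum>j\<le>n. ((n + mu) gchoose (n - j)) * ((n + mu + nu + j) gchoose j) * (- t) ^ j)"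
proof -
  define N where "N = n + mu + nu"
  have "(\<Sum>s\<le>n. ((n + mu) gchoose (n - s)) * ((n + mu + nu + s) gchoose s) * (-1) ^ s *
           (\<Sum>j\<le>s. ((mu + s) gchoose (s - j)) * (cc gchoose j) * t ^ j))
      = (\<Sum>s\<le>n. \<Sum>j\<le>s. ((n + mu) gchoose (n - s)) * ((n + mu + nu + s) gchoose s) * (-1) ^ s *
           (((mu + s) gchoose (s - j)) * (cc gchoose j) * t ^ j))"
    by (simp add: sum_distrib_left)
  also have "\<dots> = (\<Sum>j\<le>n. \<Sum>i\<le>n - j. ((n + mu) gchoose (n - (j + i))) * ((n + mu + nu + (j + i)) gchoose (j + i)) * (-1) ^ (j + i) *
           (((mu + (j + i)) gchoose (j + i - j)) * (cc gchoose j) * t ^ j))"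
    by (rule sum_triangle_swap')
  also have "\<dots> = (\<Sum>j\<le>n. (cc gchoose j) * t ^ j * ((n + mu) gchoose (n - j)) *
           (\<Sum>i\<le>n - j. real ((n - j) choose (n - j - i)) * ((- (N + 1)) gchoose (j + i))))"
  proof (rule sum.cong[OF refl])
    fix j assume j: "j \<in> {..n}"
    show "(\<Sum>i\<le>n - j. ((n + mu) gchoose (n - (j + i))) * ((n + mu + nu + (j + i)) gchoose (j + i)) * (-1) ^ (j + i) *
           (((mu + (j + i)) gchoose (j + i - j)) * (cc gchoose j) * t ^ j)) =
          (cc gchoose j) * t ^ j * ((n + mu) gchoose (n - j)) *
           (\<Sum>i\<le>n - j. real ((n - j) choose (n - j - i)) * ((- (N + 1)) gchoose (j + i)))"
      unfolding sum_distrib_left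
    proof (rule sum.cong[OF refl])
      fix i assume i: "i \<in> {..n - j}"
      have e1: "n + mu - real (n - (j + i)) = mu + (j + i)" using i j by (simp add: of_nat_diff)
      have e2: "n - j - (n - (j + i)) = j + i - j" using i j by auto
      have e3: "n - (j + i) = n - j - i" by simp
      have tr0: "((n + mu) gchoose (n - j)) * real ((n - j) choose (n - (j + i))) =
                ((n + mu) gchoose (n - (j + i))) * ((n + mu - real (n - (j + i))) gchoose (n - j - (n - (j + i))))"
        using i j by (intro trinom) auto
      have tr: "((n + mu) gchoose (n - j)) * real ((n - j) choose (n - j - i)) =
                ((n + mu) gchoose (n - (j + i))) * ((mu + (j + i)) gchoose (j + i - j))"
        using tr0 unfolding e1 e2 by (simp only: e3)
      have ng: "(-1) ^ (j + i) * ((n + mu + nu + (j + i)) gchoose (j + i)) = ((- (N + 1)) gchoose (j + i))"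
        using neg_gchoose[where N=N and s="j + i"] by (simp add: N_def add_ac)
      show "((n + mu) gchoose (n - (j + i))) * ((n + mu + nu + (j + i)) gchoose (j + i)) * (-1) ^ (j + i) *
           (((mu + (j + i)) gchoose (j + i - j)) * (cc gchoose j) * t ^ j) =
           (cc gchoose j) * t ^ j * ((n + mu) gchoose (n - j)) *
           (real ((n - j) choose (n - j - i)) * ((- (N + 1)) gchoose (j + i)))"
      proof -
        have "((n + mu) gchoose (n - (j + i))) * ((n + mu + nu + (j + i)) gchoose (j + i)) * (-1) ^ (j + i) *
           (((mu + (j + i)) gchoose (j + i - j)) * (cc gchoose j) * t ^ j) =
           (((n + mu) gchoose (n - (j + i))) * ((mu + (j + i)) gchoose (j + i - j))) *
           ((-1) ^ (j + i) * ((n + mu + nu + (j + i)) gchoose (j + i))) * ((cc gchoose j) * t ^ j)"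
          by (simp only: mult_ac)
        also have "\<dots> = (((n + mu) gchoose (n - j)) * real ((n - j) choose (n - j - i))) *
           ((- (N + 1)) gchoose (j + i)) * ((cc gchoose j) * t ^ j)"
          by (simp only: tr ng)
        finally show ?thesis by (simp only: mult_ac)
      qed
    qed
  qed
  also have "\<dots> = (\<Sum>j\<le>n. (cc gchoose j) * t ^ j * ((n + mu) gchoose (n - j)) * ((cc - j) gchoose n))"
  proof (rule sum.cong[OF refl])
    fix j assume j: "j \<in> {..n}"
    have eqv: "- (N + 1) + real (n - j) = cc - j" using j by (simp add: N_def cc_def of_nat_diff)
    have jn: "j \<le> n" using j by simp
    note pv = partial_vandermonde[OF jn, of "- (N + 1)", unfolded eqv]
    show "(cc gchoose j) * t ^ j * ((n + mu) gchoose (n - j)) *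
           (\<Sum>i\<le>n - j. real ((n - j) choose (n - j - i)) * ((- (N + 1)) gchoose (j + i))) =
          (cc gchoose j) * t ^ j * ((n + mu) gchoose (n - j)) * ((cc - j) gchoose n)"
      by (simp only: pv)
  qed
  also have "\<dots> = (cc gchoose n) * (\<Sum>j\<le>n. ((n + mu) gchoose (n - j)) * ((n + mu + nu + j) gchoose j) * (- t) ^ j)"
    unfolding sum_distrib_left
  proof (rule sum.cong[OF refl])
    fix j assume j: "j \<in> {..n}"
    have a1: "(cc gchoose (n + j)) * real ((n + j) choose j) = (cc gchoose j) * ((cc - j) gchoose (n + j - j))"
      by (intro trinom) auto
    have a2: "(cc gchoose (n + j)) * real ((n + j) choose n) = (cc gchoose n) * ((cc - n) gchoose (n + j - n))"
      by (intro trinom) auto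
    have a3: "(n + j) choose j = (n + j) choose n" by (simp add: binomial_symmetric[of j "n + j"])
    have a4: "(cc gchoose j) * ((cc - j) gchoose n) = (cc gchoose n) * ((cc - n) gchoose j)"
      using a1 a2 a3 by simp
    have a5: "(cc - n) = - (N + 1)" by (simp add: cc_def N_def)
    have a6: "(- t) ^ j * ((n + mu + nu + j) gchoose j) = t ^ j * ((- (N + 1)) gchoose j)"
    proof -
      have h: "real n + mu + nu + real j = N + real j" by (simp add: N_def)
      have "(- t) ^ j * ((n + mu + nu + j) gchoose j) = t ^ j * ((-1) ^ j * ((N + j) gchoose j))"
        unfolding h power_minus[of t j] by (simp only: mult_ac)
      also have "\<dots> = t ^ j * ((- (N + 1)) gchoose j)" using neg_gchoose[where N=N and s=j] by simp
      finally show ?thesis .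
    qed
    show "(cc gchoose j) * t ^ j * ((n + mu) gchoose (n - j)) * ((cc - j) gchoose n) =
          (cc gchoose n) * (((n + mu) gchoose (n - j)) * ((n + mu + nu + j) gchoose j) * (- t) ^ j)"
    proof -
      have "(cc gchoose j) * t ^ j * ((n + mu) gchoose (n - j)) * ((cc - j) gchoose n) =
            ((cc gchoose j) * ((cc - j) gchoose n)) * t ^ j * ((n + mu) gchoose (n - j))"
        by (simp only: mult_ac)
      also have "\<dots> = (cc gchoose n) * (t ^ j * ((- (N + 1)) gchoose j)) * ((n + mu) gchoose (n - j))"
        unfolding a4 a5 by (simp only: mult_ac)
      also have "\<dots> = (cc gchoose n) * ((- t) ^ j * ((n + mu + nu + j) gchoose j)) * ((n + mu) gchoose (n - j))"
        by (simp only: a6)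
      finally show ?thesis by (simp only: mult_ac)
    qed
  qed
  finally show ?thesis .
qed

lemma set_integral_sum_real:
  fixes f :: "nat \<Rightarrow> real \<Rightarrow> real"
  assumes "\<And>i. i \<in> I \<Longrightarrow> set_integrable M A (f i)"
  shows "set_integrable M A (\<lambda>x. \<Sum>i\<in>I. f i x)"
    and "(LINT x:A|M. (\<Sum>i\<in>I. f i x)) = (\<Sum>i\<in>I. LINT x:A|M. f i x)"
proof -
  have e: "(\<lambda>x. indicator A x *\<^sub>R (\<Sum>i\<in>I. f i x)) = (\<lambda>x. \<Sum>i\<in>I. indicator A x *\<^sub>R f i x)"
    by (simp add: sum_distrib_left)
  show "set_integrable M A (\<lambda>x. \<Sum>i\<in>I. f i x)"
    unfolding set_integrable_def e using assms unfolding set_integrable_def by (intro Bochner_Integration.integrable_sum[where f="\<lambda>i x. indicator A x *\<^sub>R f i x"]) auto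
  show "(LINT x:A|M. (\<Sum>i\<in>I. f i x)) = (\<Sum>i\<in>I. LINT x:A|M. f i x)"
    unfolding set_lebesgue_integral_def e using assms unfolding set_integrable_def by (intro Bochner_Integration.integral_sum[where f="\<lambda>i x. indicator A x *\<^sub>R f i x"]) auto
qed

lemma LBINT_real_Ioo:
  fixes a b :: real assumes "a \<le> b"
  shows "(LBINT y=ereal a..ereal b. f y) = (LINT y:{a<..<b}|lborel. f y)"
  using assms by (subst interval_integral_Ioo) auto

context jac_setup begin

definition "dd n s = (((real n + mu) gchoose (n - s)) * ((real n + mu + nu + real s) gchoose s) * (-1) ^ s)"

lemma omegaG_expand:
  assumes y: "0 < y" "y < 1"
  shows "omega_star mu nu y * G n mu nu y = (\<Sum>s\<le>n. dd n s * gg s y)"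
proof -
  have "G n mu nu y = (\<Sum>s\<le>n. ((n + mu) gchoose (n - s)) * ((n + mu + nu + s) gchoose s) * ((2 * y - 1 - 1) / 2) ^ s)"
    unfolding G_def by (rule jacobiP_onesided)
  also have "\<dots> = (\<Sum>s\<le>n. dd n s * (1 - y) ^ s)"
  proof (rule sum.cong[OF refl])
    fix s
    have "(2 * y - 1 - 1) / 2 = (-1) * (1 - y)" by simp
    hence "((2 * y - 1 - 1) / 2) ^ s = (-1) ^ s * (1 - y) ^ s" by (simp only: power_mult_distrib)
    thus "((n + mu) gchoose (n - s)) * ((n + mu + nu + s) gchoose s) * ((2 * y - 1 - 1) / 2) ^ s = dd n s * (1 - y) ^ s"
      by (simp add: dd_def mult_ac)
  qed
  finally show ?thesis
    by (simp add: omega_star_def gg_def sum_distrib_left mult_ac)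
qed

lemma left_expand:
  assumes t: "0 < t" "t < 1"
  shows "(LBINT y=ereal 0..ereal t. (t - y) powr cc * (omega_star mu nu y * G n mu nu y)) = (\<Sum>s\<le>n. dd n s * Lf s t)"
proof -
  have "(LBINT y=ereal 0..ereal t. (t - y) powr cc * (omega_star mu nu y * G n mu nu y)) =
        (LINT y:{0<..<t}|lborel. (\<Sum>s\<le>n. dd n s * ((t - y) powr cc * gg s y)))"
    unfolding LBINT_real_Ioo[OF less_imp_le[OF t(1)]]
    by (rule set_lebesgue_integral_cong) (use t in \<open>auto simp: omegaG_expand sum_distrib_left mult_ac\<close>)
  also have "\<dots> = (\<Sum>s\<le>n. LINT y:{0<..<t}|lborel. dd n s * ((t - y) powr cc * gg s y))"
    by (rule set_integral_sum_real(2)) (use IL[OF t] in auto)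
  also have "\<dots> = (\<Sum>s\<le>n. dd n s * Lf s t)" by (simp add: Lf_def)
  finally show ?thesis .
qed

lemma right_expand:
  assumes t: "0 < t" "t < 1"
  shows "(LBINT y=ereal t..ereal 1. (y - t) powr cc * (omega_star mu nu y * G n mu nu y)) = (\<Sum>s\<le>n. dd n s * Rf s t)"
proof -
  have "(LBINT y=ereal t..ereal 1. (y - t) powr cc * (omega_star mu nu y * G n mu nu y)) =
        (LINT y:{t<..<1}|lborel. (\<Sum>s\<le>n. dd n s * ((y - t) powr cc * gg s y)))"
    unfolding LBINT_real_Ioo[OF less_imp_le[OF t(2)]]
    by (rule set_lebesgue_integral_cong) (use t in \<open>auto simp: omegaG_expand sum_distrib_left mult_ac\<close>)
  also have "\<dots> = (\<Sum>s\<le>n. LINT y:{t<..<1}|lborel. dd n s * ((y - t) powr cc * gg s y))"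
    by (rule set_integral_sum_real(2)) (use IR[OF t] in auto)
  also have "\<dots> = (\<Sum>s\<le>n. dd n s * Rf s t)" by (simp add: Rf_def)
  finally show ?thesis .
qed

lemma combined:
  assumes t: "0 < t" "t < 1"
  shows "sin (pi * nu) * (\<Sum>s\<le>n. dd n s * Lf s t) + sin (pi * mu) * (\<Sum>s\<le>n. dd n s * Rf s t)
         = - pi * (cc gchoose n) * (-1) ^ n * G n nu mu t"
proof -
  have "sin (pi * nu) * (\<Sum>s\<le>n. dd n s * Lf s t) + sin (pi * mu) * (\<Sum>s\<le>n. dd n s * Rf s t)
        = (\<Sum>s\<le>n. dd n s * (sin (pi * nu) * Lf s t + sin (pi * mu) * Rf s t))"
    by (simp add: sum_distrib_left sum.distrib algebra_simps)
  also have "\<dots> = - pi * (\<Sum>s\<le>n. dd n s * Qf s t)"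
    by (simp add: Pform[OF t] sum_distrib_left mult_ac)
  also have "(\<Sum>s\<le>n. dd n s * Qf s t) = (cc gchoose n) * (\<Sum>j\<le>n. ((n + mu) gchoose (n - j)) * ((n + mu + nu + j) gchoose j) * (- t) ^ j)"
    using V_identity[of n mu nu t] unfolding dd_def Qf_def cc_def by (simp add: mult_ac)
  also have "(\<Sum>j\<le>n. ((n + mu) gchoose (n - j)) * ((n + mu + nu + j) gchoose j) * (- t) ^ j) = jacobiP n mu nu (1 - 2 * t)"
    by (subst jacobiP_onesided) simp
  also have "jacobiP n mu nu (1 - 2 * t) = (-1) ^ n * G n nu mu t"
    unfolding G_def using jacobiP_sym[of n nu mu "2 * t - 1"] by simp
  finally show ?thesis by (simp add: mult_ac)
qed

end

lemma gamma_ratio: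
  fixes alpha :: real assumes a: "1 < alpha"
  shows "Gamma (real n + alpha - 1) / Gamma (real n + 1) = Gamma (alpha - 1) * ((-1) ^ n * ((1 - alpha) gchoose n))"
proof -
  have a1: "alpha - 1 \<notin> \<int>\<^sub>\<le>\<^sub>0" using a by (auto elim!: nonpos_Ints_cases)
  have gpos: "Gamma (alpha - 1) \<noteq> 0" using a1 by (simp add: Gamma_eq_zero_iff)
  have "(1 - alpha) gchoose n = (- (alpha - 1)) gchoose n" by simp
  also have "\<dots> = (-1) ^ n * ((alpha - 1 + real n - 1) gchoose n)" by (rule gbinomial_minus)
  finally have e1: "(-1) ^ n * ((1 - alpha) gchoose n) = ((alpha - 1 + real n - 1) gchoose n)"
    by (simp flip: power_add mult_2 add: mult.assoc[symmetric] power_mult_distrib[symmetric])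
  have e2: "((alpha - 1 + real n - 1) gchoose n) = pochhammer (alpha - 1) n / fact n"
    by (simp add: gbinomial_pochhammer')
  have e3: "pochhammer (alpha - 1) n = Gamma (alpha - 1 + real n) / Gamma (alpha - 1)"
    by (rule pochhammer_Gamma[OF a1])
  have e4: "Gamma (real n + 1) = fact n" using Gamma_fact[of n, where 'a=real] by (simp add: add.commute)
  show ?thesis unfolding e1 e2 e3 e4 using gpos by (simp add: field_simps add_ac)
qed

theorem theorem2p1:
  fixes p alpha mu nu t :: real and n :: nat
  assumes "0 < p" "p < 1" "1 < alpha" "alpha < 2"
    and "alpha - 2 < mu" "mu < 0" "alpha - 2 < nu" "nu < 0"
    and "mu + nu = alpha - 2"
    and "p * sin (pi * mu) = (1 - p) * sin (pi * nu)"
    and "0 < t" "t < 1"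
  shows "two_sided_int alpha p 0 1 mu nu (2 - alpha)
           (\<lambda>s. omega_star mu nu s * G n mu nu s) t
         = Gamma (real n + alpha - 1) / Gamma (real n + 1) * G n nu mu t"
proof -
  have mu': "-1 < mu" using assms(3,5) by linarith
  have nu': "-1 < nu" using assms(3,7) by linarith
  have mn: "-1 < mu + nu" using assms(3,9) by linarith
  interpret J: jac_setup mu nu using mu' assms(6) nu' assms(8) mn by unfold_locales auto
  have t: "0 < t" "t < 1" using assms(11,12) by auto
  have sg: "2 - alpha - 1 = J.cc" using assms(9) by (simp add: J.cc_def)
  have ccn: "J.cc = 1 - alpha" using assms(9) by (simp add: J.cc_def)
  define SL where "SL = (\<Sum>s\<le>n. J.dd n s * J.Lf s t)"
  define SR where "SR = (\<Sum>s\<le>n. J.dd n s * J.Rf s t)"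
  define X where "X = (J.cc gchoose n) * (-1) ^ n * G n nu mu t"
  have L: "left_frac_int (2 - alpha) 0 (\<lambda>s. omega_star mu nu s * G n mu nu s) t = SL / Gamma (2 - alpha)"
    unfolding left_frac_int_def sg using J.left_expand[OF t, of n] by (simp add: SL_def)
  have R: "right_frac_int (2 - alpha) 1 (\<lambda>s. omega_star mu nu s * G n mu nu s) t = SR / Gamma (2 - alpha)"
    unfolding right_frac_int_def sg using J.right_expand[OF t, of n] by (simp add: SR_def)
  have comb: "sin (pi * nu) * SL + sin (pi * mu) * SR = - pi * X"
    using J.combined[OF t, of n] by (simp add: SL_def SR_def X_def mult_ac)
  have sm: "sin (pi * mu) < 0" using sin_pi_neg[OF mu' assms(6)] .
  have sn: "sin (pi * nu) < 0" using sin_pi_neg[OF nu' assms(8)] .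
  have p1: "p * (sin (pi * mu) + sin (pi * nu)) = sin (pi * nu)" using assms(10) by (simp add: algebra_simps)
  have p2: "(1 - p) * (sin (pi * mu) + sin (pi * nu)) = sin (pi * mu)" using assms(10) by (simp add: algebra_simps)
  have "two_sided_int alpha p 0 1 mu nu (2 - alpha) (\<lambda>s. omega_star mu nu s * G n mu nu s) t =
        (sin (pi * mu) + sin (pi * nu)) / sin (pi * alpha) * (p * (SL / Gamma (2 - alpha)) + (1 - p) * (SR / Gamma (2 - alpha)))"
    unfolding two_sided_int_def L R C_const_def ..
  also have "\<dots> = (p * (sin (pi * mu) + sin (pi * nu)) * SL + (1 - p) * (sin (pi * mu) + sin (pi * nu)) * SR) / (sin (pi * alpha) * Gamma (2 - alpha))"
  proof -
    have g2: "Gamma (2 - alpha) > 0" using assms(4) by (intro Gamma_real_pos) simp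
    have s2: "sin (pi * alpha) \<noteq> 0"
    proof -
      have "sin (pi * (alpha - 1)) > 0" using assms(3,4)
        by (intro sin_gt_zero) (auto simp: algebra_simps)
      moreover have "sin (pi * (alpha - 1)) = - sin (pi * alpha)"
        by (simp add: right_diff_distrib sin_diff)
      ultimately show ?thesis by simp
    qed
    show ?thesis using g2 s2 by (simp add: field_simps)
  qed
  also have "\<dots> = (sin (pi * nu) * SL + sin (pi * mu) * SR) / (sin (pi * alpha) * Gamma (2 - alpha))"
    unfolding p1 p2 ..
  also have "\<dots> = - pi * X / (sin (pi * alpha) * Gamma (2 - alpha))" unfolding comb ..
  also have "sin (pi * alpha) * Gamma (2 - alpha) = - pi / Gamma (alpha - 1)"
  proof -
    have a1: "alpha - 1 \<notin> \<int>"
    proof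
      assume "alpha - 1 \<in> \<int>"
      hence "alpha - 1 + 1 \<in> \<int>" by (intro Ints_add) auto
      then obtain k where k: "alpha = of_int k" by (auto elim: Ints_cases)
      with assms(3,4) have "1 < k" "k < 2" by auto
      thus False by auto
    qed
    have "Gamma (alpha - 1) * Gamma (1 - (alpha - 1)) = pi / sin (pi * (alpha - 1))"
      by (rule Gamma_reflection_real[OF a1])
    moreover have "sin (pi * (alpha - 1)) = - sin (pi * alpha)"
      by (simp add: right_diff_distrib sin_diff)
    moreover have "Gamma (alpha - 1) > 0" using assms(3) by (intro Gamma_real_pos) simp
    moreover have "sin (pi * alpha) \<noteq> 0"
    proof -
      have "sin (pi * (alpha - 1)) > 0" using assms(3,4)
        by (intro sin_gt_zero) (auto simp: algebra_simps)
      thus ?thesis using \<open>sin (pi * (alpha - 1)) = - sin (pi * alpha)\<close> by simp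
    qed
    ultimately show ?thesis by (simp add: field_simps)
  qed
  also have "- pi * X / (- pi / Gamma (alpha - 1)) = Gamma (alpha - 1) * X" by simp
  also have "\<dots> = Gamma (real n + alpha - 1) / Gamma (real n + 1) * G n nu mu t"
    unfolding gamma_ratio[OF assms(3)] X_def ccn by (simp add: mult_ac)
  finally show ?thesis .
qed

end
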